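(* Let $n\ge0$ be an integer, $a,c\in\mathbb C$, and let $f\in W_c^n$. Then (for parameter values at which all denominators are nonzero) \begin{gather*} \frac{\big(a^2 q, q, cz, c/z;q,p\big)_n}{(ac, c/a, aqz, aq/z;q,p)_n}f(z) = \sum_{k=0}^n q^k \frac{\theta\big(a^2 q^{2k};p\big)}{\theta(a^2 ;p)}\frac{\big( q^{-n}, a^2 ,aq/c,ac q^n, az, a/z;q,p\big)_k}{\big(q, a^2 q^{n+1},ac, aq^{1-n}/c, aqz, aq/z;q,p\big)_k}f\big(a q^k\big). \end{gather*}
   Context: Fix complex numbers $q,p$ with $0<|q|<1$, $|p|<1$. The modified Jacobi theta function is $\theta(x;p)=\prod_{j\ge0}(1-p^jx)(1-p^{j+1}/x)$ for $x\neq0$, and $\theta(x_1,\dots,x_r;p)=\prod_i\theta(x_i;p)$. The theta shifted factorial is $(a;q,p)_n=\prod_{k=0}^{n-1}\theta(aq^k;p)$ for $n\ge1$, $(a;q,p)_0=1$, and $(a_1,\dots,a_r;q,p)_n=\prod_i(a_i;q,p)_n$. The space $W_c^n$ is the complex span of all functions $g_k(z)/(cz,c/z;q,p)_k$, $0\le k\le n$, where $g_k$ ranges over functions holomorphic on $\mathbb C\setminus\{0\}$ with $g_k(z)=g_k(1/z)$ and $g_k(pz)=p^{-k}z^{-2k}g_k(z)$. *)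

theory Defs
  imports "HOL-Analysis.Analysis" "HOL-Library.Function_Algebras"
begin

definition mtheta :: "complex \<Rightarrow> complex \<Rightarrow> complex" where
  "mtheta x p = (\<Prod>j. (1 - p ^ j * x) * (1 - p ^ Suc j / x))"

definition tpoch :: "complex \<Rightarrow> complex \<Rightarrow> complex \<Rightarrow> nat \<Rightarrow> complex" where
  "tpoch a q p n = (\<Prod>k<n. mtheta (a * q ^ k) p)"

definition fscale :: "complex \<Rightarrow> (complex \<Rightarrow> complex) \<Rightarrow> (complex \<Rightarrow> complex)" where
  "fscale s f = (\<lambda>z. s * f z)"

definition Wgen :: "complex \<Rightarrow> complex \<Rightarrow> complex \<Rightarrow> nat \<Rightarrow> (complex \<Rightarrow> complex) set" where
  "Wgen q p c n = {(\<lambda>z. g z / (tpoch (c * z) q p k * tpoch (c / z) q p k)) | g k.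
      k \<le> n \<and> g holomorphic_on (- {0}) \<and>
      (\<forall>z. z \<noteq> 0 \<longrightarrow> g z = g (1 / z)) \<and>
      (\<forall>z. z \<noteq> 0 \<longrightarrow> g (p * z) = inverse (p ^ k) * inverse (z ^ (2 * k)) * g z)}"

definition W :: "complex \<Rightarrow> complex \<Rightarrow> complex \<Rightarrow> nat \<Rightarrow> (complex \<Rightarrow> complex) set" where
  "W q p c n = module.span fscale (Wgen q p c n)"

end

theory Submission
  imports Defs "HOL-Complex_Analysis.Complex_Analysis"
begin

definition thk :: "complex \<Rightarrow> nat \<Rightarrow> complex \<Rightarrow> complex" where
  "thk p k x = (\<Prod>j. (1 - p ^ (j + k) * x) * (1 - p ^ Suc (j + k) / x))"

lemma mtheta_thk: "mtheta x p = thk p 0 x"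
  by (simp add: mtheta_def thk_def)

lemma thk_bound:
  fixes p x :: complex assumes p: "norm p < 1" and x: "x \<noteq> 0"
  shows "norm ((1 - p ^ (n + k) * x) * (1 - p ^ Suc (n + k) / x) - 1)
        \<le> (norm x + norm (p / x) + 1) * norm p ^ n"
proof -
  have e: "(1 - p ^ (n + k) * x) * (1 - p ^ Suc (n + k) / x) - 1
        = p^(n+k) * (- x - p / x + p ^ (n + k) * p)"
    using x by (simp add: field_simps)
  have "norm (- x - p / x + p ^ (n + k) * p) \<le> norm x + norm (p/x) + norm (p^(n + k) * p)"
    using norm_triangle_ineq[of "-x-p/x" "p ^ (n + k) * p"] norm_triangle_ineq4[of "-x" "p/x"] by simp
  also have "norm (p^(n + k)*p) \<le> 1" using p
    by (simp add: norm_mult norm_power power_le_one mult_le_one less_imp_le)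
  finally have A: "norm (- x - p / x + p ^ (n + k) * p) \<le> norm x + norm (p/x) + 1" by simp
  have B: "norm p ^ (n + k) \<le> norm p ^ n"
    using p by (simp add: power_decreasing less_imp_le power_add mult_left_le power_le_one)
  have "norm ((1 - p ^ (n + k) * x) * (1 - p ^ Suc (n + k) / x) - 1)
      = norm p ^ (n + k) * norm (- x - p / x + p ^ (n + k) * p)"
    unfolding e by (simp add: norm_mult norm_power)
  also have "\<dots> \<le> norm p ^ n * (norm x + norm (p/x) + 1)"
    by (rule mult_mono[OF B A]) auto
  finally show ?thesis by (simp add: mult.commute)
qed

lemma thk_has_prod:
  fixes p x :: complex assumes p: "norm p < 1" and x: "x \<noteq> 0"
  shows "(\<lambda>j. (1 - p ^ (j + k) * x) * (1 - p ^ Suc (j + k) / x)) has_prod thk p k x"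
proof -
  have "summable (\<lambda>j. norm ((1 - p ^ (j + k) * x) * (1 - p ^ Suc (j + k) / x) - 1))"
  proof (rule summable_comparison_test)
    show "summable (\<lambda>j. (norm x + norm (p / x) + 1) * norm p ^ j)"
      using p by (intro summable_mult summable_geometric) auto
  qed (use thk_bound[OF p x] in auto)
  then have "abs_convergent_prod (\<lambda>j. (1 - p ^ (j + k) * x) * (1 - p ^ Suc (j + k) / x))"
    using abs_convergent_prod_conv_summable by blast
  then have "convergent_prod (\<lambda>j. (1 - p ^ (j + k) * x) * (1 - p ^ Suc (j + k) / x))"
    using abs_convergent_prod_imp_convergent_prod by blast
  then show ?thesis unfolding thk_def by (rule convergent_prod_has_prod)
qed

lemma th_has_prod:
  fixes p x :: complex assumes p: "norm p < 1" and x: "x \<noteq> 0"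
  shows "(\<lambda>j. (1 - p ^ j * x) * (1 - p ^ Suc j / x)) has_prod mtheta x p"
  using thk_has_prod[OF p x, of 0] by (simp add: mtheta_thk)

lemma thk_uniform:
  fixes p :: complex assumes p: "norm p < 1" and K: "compact K" "0 \<notin> K"
  shows "uniform_limit K (\<lambda>N x. \<Prod>j<N. (1 - p ^ (j + k) * x) * (1 - p ^ Suc (j + k) / x)) (thk p k) sequentially"
proof -
  obtain R where R: "\<And>x. x \<in> K \<Longrightarrow> norm x + norm (p / x) + 1 \<le> R"
  proof -
    have "continuous_on K (\<lambda>x. norm x + norm (p / x) + 1)"
      using K by (intro continuous_intros) auto
    then have "compact ((\<lambda>x. norm x + norm (p / x) + 1) ` K)"
      using K compact_continuous_image by blast
    then obtain R where "\<forall>y\<in>(\<lambda>x. norm x + norm (p / x) + 1) ` K. norm y \<le> R"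
      using compact_imp_bounded bounded_iff by blast
    then show ?thesis using that by force
  qed
  define P where "P = (\<lambda>N x. \<Prod>j<N. (1 - p ^ (j + k) * x) * (1 - p ^ Suc (j + k) / x))"
  have uc: "uniformly_convergent_on K P"
    unfolding P_def
  proof (rule uniformly_convergent_on_prod')
    show "uniformly_convergent_on K (\<lambda>N x. \<Sum>n<N. norm ((1 - p ^ (n + k) * x) * (1 - p ^ Suc (n + k) / x) - 1))"
    proof (rule Weierstrass_m_test'_ev)
      show "summable (\<lambda>n. R * norm p ^ n)"
        using p by (intro summable_mult summable_geometric) auto
      show "\<forall>\<^sub>F n in sequentially. \<forall>x\<in>K. norm (norm ((1 - p ^ (n + k) * x) * (1 - p ^ Suc (n + k) / x) - 1)) \<le> R * norm p ^ n"
      proof (intro always_eventually allI ballI)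
        fix n :: nat and x assume x: "x \<in> K"
        then have "x \<noteq> 0" using K by auto
        from thk_bound[OF p this, of n k] R[OF x]
        show "norm (norm ((1 - p ^ (n + k) * x) * (1 - p ^ Suc (n + k) / x) - 1)) \<le> R * norm p ^ n"
          by (smt (verit, best) mult_right_mono norm_ge_zero real_norm_def zero_le_power)
      qed
    qed
  qed (use K in \<open>auto intro!: continuous_intros\<close>)
  then obtain g where g: "uniform_limit K P g sequentially"
    by (auto simp: uniformly_convergent_on_def)
  also have "?this \<longleftrightarrow> uniform_limit K P (thk p k) sequentially"
  proof (intro uniform_limit_cong)
    fix x assume "x \<in> K"
    with g have "(\<lambda>n. P n x) \<longlonglongrightarrow> g x"
      by (metis tendsto_uniform_limitI)
    moreover have "(\<lambda>n. P n x) \<longlonglongrightarrow> thk p k x"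
    proof -
      have "x \<noteq> 0" using \<open>x \<in> K\<close> K by auto
      then have "convergent_prod (\<lambda>j. (1 - p ^ (j + k) * x) * (1 - p ^ Suc (j + k) / x))"
        using thk_has_prod[OF p] has_prod_iff by blast
      from convergent_prod_LIMSEQ[OF this] show ?thesis
        unfolding P_def thk_def using LIMSEQ_lessThan_iff_atMost by blast
    qed
    ultimately show "g x = thk p k x" using LIMSEQ_unique by blast
  qed auto
  finally show ?thesis unfolding P_def .
qed

lemma thk_holo:
  fixes p :: complex assumes p: "norm p < 1"
  shows "thk p k holomorphic_on (- {0})"
proof (rule holomorphic_uniform_sequence)
  show "open (- {0::complex})" by auto
  show "(\<lambda>x. \<Prod>j<n. (1 - p ^ (j + k) * x) * (1 - p ^ Suc (j + k) / x)) holomorphic_on - {0}" for n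
    by (intro holomorphic_intros) auto
  fix x :: complex assume x: "x \<in> - {0}"
  show "\<exists>d>0. cball x d \<subseteq> - {0} \<and> uniform_limit (cball x d) (\<lambda>n x. \<Prod>j<n. (1 - p ^ (j + k) * x) * (1 - p ^ Suc (j + k) / x)) (thk p k) sequentially"
  proof (intro exI conjI)
    show "norm x / 2 > 0" using x by auto
    show sub: "cball x (norm x / 2) \<subseteq> - {0}"
      using x by (auto simp: dist_norm)
    show "uniform_limit (cball x (norm x / 2)) (\<lambda>n x. \<Prod>j<n. (1 - p ^ (j + k) * x) * (1 - p ^ Suc (j + k) / x)) (thk p k) sequentially"
      using sub by (intro thk_uniform p) auto
  qed
qed

lemma th_holo:
  fixes p :: complex assumes p: "norm p < 1"
  shows "(\<lambda>x. mtheta x p) holomorphic_on (- {0})"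
  using thk_holo[OF p, of 0] by (simp add: mtheta_thk[abs_def])

abbreviation th where "th p x \<equiv> mtheta x p"

lemma th_recip:
  fixes p x :: complex assumes x: "x \<noteq> 0" and p: "p \<noteq> 0"
  shows "mtheta (1 / x) p = mtheta (p * x) p"
proof -
  have "(\<lambda>j. (1 - p ^ j * (1 / x)) * (1 - p ^ Suc j / (1 / x)))
      = (\<lambda>j. (1 - p ^ j * (p * x)) * (1 - p ^ Suc j / (p * x)))"
    using x p by (auto simp: fun_eq_iff field_simps)
  then show ?thesis by (simp add: mtheta_def)
qed

lemma th_partial_shift:
  fixes p x :: complex assumes x: "x \<noteq> 0" and p: "p \<noteq> 0"
  shows "(\<Prod>j<N. (1 - p ^ j * (p * x)) * (1 - p ^ Suc j / (p * x))) * ((1 - x) * (1 - p ^ N / x))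
       = (\<Prod>j<N. (1 - p ^ j * x) * (1 - p ^ Suc j / x)) * ((1 - p ^ N * x) * (1 - 1 / x))"
proof (induction N)
  case 0
  then show ?case by simp
next
  case (Suc N)
  have e1: "(1 - p ^ N * (p * x)) = (1 - p ^ Suc N * x)" by (simp add: algebra_simps)
  have "p ^ Suc N / (p * x) = p ^ N / x" using \<open>p \<noteq> 0\<close> by simp
  then have e2: "(1 - p ^ Suc N / (p * x)) = (1 - p ^ N / x)" by simp
  have "(\<Prod>j<Suc N. (1 - p ^ j * (p * x)) * (1 - p ^ Suc j / (p * x))) * ((1 - x) * (1 - p ^ Suc N / x))
      = ((\<Prod>j<N. (1 - p ^ j * (p * x)) * (1 - p ^ Suc j / (p * x))) * ((1 - x) * (1 - p ^ N / x)))
        * ((1 - p ^ Suc N * x) * (1 - p ^ Suc N / x))"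
    unfolding prod.lessThan_Suc e1 e2 by (simp only: mult_ac)
  also have "\<dots> = (\<Prod>j<N. (1 - p ^ j * x) * (1 - p ^ Suc j / x)) * ((1 - p ^ N * x) * (1 - 1 / x))
        * ((1 - p ^ Suc N * x) * (1 - p ^ Suc N / x))"
    by (simp only: Suc.IH)
  also have "\<dots> = (\<Prod>j<Suc N. (1 - p ^ j * x) * (1 - p ^ Suc j / x)) * ((1 - p ^ Suc N * x) * (1 - 1 / x))"
    unfolding prod.lessThan_Suc by (simp only: mult_ac)
  finally show ?case .
qed

lemma has_prod_LIMSEQ_lessThan:
  fixes f :: "nat \<Rightarrow> complex"
  assumes "f has_prod a"
  shows "(\<lambda>N. \<Prod>j<N. f j) \<longlonglongrightarrow> a"
proof -
  have "convergent_prod f" using assms has_prod_iff by blast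
  from convergent_prod_LIMSEQ[OF this] have "(\<lambda>n. \<Prod>i\<le>n. f i) \<longlonglongrightarrow> prodinf f" .
  then have "(\<lambda>n. \<Prod>i<n. f i) \<longlonglongrightarrow> prodinf f" using LIMSEQ_lessThan_iff_atMost by blast
  then show ?thesis using assms has_prod_unique by metis
qed

lemma th_shift0:
  fixes p x :: complex assumes x: "x \<noteq> 0" and p: "p \<noteq> 0" "norm p < 1"
  shows "mtheta (p * x) p * (1 - x) = mtheta x p * (1 - 1 / x)"
proof -
  have px: "p * x \<noteq> 0" using x p by auto
  have L1: "(\<lambda>N. (\<Prod>j<N. (1 - p ^ j * (p * x)) * (1 - p ^ Suc j / (p * x))) * ((1 - x) * (1 - p ^ N / x)))
       \<longlonglongrightarrow> mtheta (p * x) p * ((1 - x) * (1 - 0 / x))"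
    by (intro tendsto_intros has_prod_LIMSEQ_lessThan th_has_prod p px x LIMSEQ_power_zero)
  have L2: "(\<lambda>N. (\<Prod>j<N. (1 - p ^ j * x) * (1 - p ^ Suc j / x)) * ((1 - p ^ N * x) * (1 - 1 / x)))
       \<longlonglongrightarrow> mtheta x p * ((1 - 0 * x) * (1 - 1 / x))"
    by (intro tendsto_intros has_prod_LIMSEQ_lessThan th_has_prod p px x LIMSEQ_power_zero)
  have "mtheta (p * x) p * ((1 - x) * (1 - 0 / x)) = mtheta x p * ((1 - 0 * x) * (1 - 1 / x))"
    using LIMSEQ_unique[OF L1 L2[folded th_partial_shift[OF x p(1)]]] .
  then show ?thesis by simp
qed

lemma th_one: "norm p < 1 \<Longrightarrow> mtheta 1 p = 0"
proof -
  assume p: "norm p < 1"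
  have hp: "(\<lambda>j. (1 - p ^ j * 1) * (1 - p ^ Suc j / 1)) has_prod mtheta 1 p"
    by (rule th_has_prod[OF p]) simp
  have "0 \<in> range (\<lambda>j. (1 - p ^ j * 1) * (1 - p ^ Suc j / 1))"
    by (intro range_eqI[where x=0]) simp
  then show ?thesis using has_prod_eq_0_iff[OF hp] by blast
qed

lemma th_p: "p \<noteq> 0 \<Longrightarrow> norm p < 1 \<Longrightarrow> mtheta p p = 0"
proof -
  assume p0: "p \<noteq> 0" and p: "norm p < 1"
  have hp: "(\<lambda>j. (1 - p ^ j * p) * (1 - p ^ Suc j / p)) has_prod mtheta p p"
    by (rule th_has_prod[OF p p0])
  have "0 \<in> range (\<lambda>j. (1 - p ^ j * p) * (1 - p ^ Suc j / p))"
    by (intro range_eqI[where x=0]) (use p0 in simp)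
  then show ?thesis using has_prod_eq_0_iff[OF hp] by blast
qed

lemma th_shift:
  fixes p x :: complex assumes x: "x \<noteq> 0" and p: "p \<noteq> 0" "norm p < 1"
  shows "mtheta (p * x) p = - mtheta x p / x"
proof (cases "x = 1")
  case True then show ?thesis using p by (simp add: th_one th_p)
next
  case False
  have "mtheta (p * x) p * (1 - x) = mtheta x p * (1 - 1 / x)" by (rule th_shift0[OF x p])
  moreover have "mtheta x p * (1 - 1 / x) = (- mtheta x p / x) * (1 - x)"
    using x by (simp add: field_simps)
  ultimately have "mtheta (p * x) p * (1 - x) = (- mtheta x p / x) * (1 - x)" by simp
  moreover have "1 - x \<noteq> 0" using False by simp
  ultimately show ?thesis by (metis mult_cancel_right)
qed

lemma th_inv:
  fixes p x :: complex assumes x: "x \<noteq> 0" and p: "p \<noteq> 0" "norm p < 1"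
  shows "mtheta (1 / x) p = - mtheta x p / x"
  using th_recip[OF x p(1)] th_shift[OF x p] by simp

lemma th_zero_iff:
  fixes p x :: complex assumes x: "x \<noteq> 0" and p: "p \<noteq> 0" "norm p < 1"
  shows "mtheta x p = 0 \<longleftrightarrow> (\<exists>m::int. x = p powi m)"
proof -
  have hp: "(\<lambda>j. (1 - p ^ j * x) * (1 - p ^ Suc j / x)) has_prod mtheta x p"
    by (rule th_has_prod[OF p(2) x])
  have "mtheta x p = 0 \<longleftrightarrow> 0 \<in> range (\<lambda>j. (1 - p ^ j * x) * (1 - p ^ Suc j / x))"
    by (rule has_prod_eq_0_iff[OF hp])
  also have "\<dots> \<longleftrightarrow> (\<exists>m::int. x = p powi m)"
  proof
    assume "0 \<in> range (\<lambda>j. (1 - p ^ j * x) * (1 - p ^ Suc j / x))"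
    then obtain j where "(1 - p ^ j * x) * (1 - p ^ Suc j / x) = 0" by auto
    then have "p ^ j * x = 1 \<or> p ^ Suc j = x"
      unfolding mult_eq_0_iff using x by (auto simp: field_simps)
    then show "\<exists>m::int. x = p powi m"
    proof
      assume "p ^ j * x = 1"
      then have "x = p powi (- int j)" using p by (simp add: power_int_minus field_simps)
      then show ?thesis by blast
    next
      assume "p ^ Suc j = x"
      then have "x = p powi (int (Suc j))" unfolding power_int_of_nat by simp
      then show ?thesis by blast
    qed
  next
    assume "\<exists>m::int. x = p powi m"
    then obtain m :: int where m: "x = p powi m" by blast
    show "0 \<in> range (\<lambda>j. (1 - p ^ j * x) * (1 - p ^ Suc j / x))"
    proof (cases "m \<ge> 1")
      case True
      define j where "j = nat m - 1"
      have j: "m = int (Suc j)" using True by (simp add: j_def)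
      then have "x = p ^ Suc j" using m by (simp only: power_int_of_nat)
      then show ?thesis by (intro range_eqI[where x=j]) (use p in simp)
    next
      case False
      define j where "j = nat (- m)"
      have j: "m = - int j" using False by (simp add: j_def)
      then have "x = inverse (p ^ j)" using m by (simp add: power_int_minus)
      then show ?thesis by (intro range_eqI[where x=j]) (use p in simp)
    qed
  qed
  finally show ?thesis .
qed


lemma th_head:
  fixes p x :: complex assumes x: "x \<noteq> 0" and p: "norm p < 1"
  shows "mtheta x p = thk p 1 x * ((1 - x) * (1 - p / x))"
proof -
  have h1: "(\<lambda>j. (1 - p ^ (j + 1) * x) * (1 - p ^ Suc (j + 1) / x)) has_prod thk p 1 x"
    by (rule thk_has_prod[OF p x])
  have "(\<lambda>n. (\<lambda>j. (1 - p ^ j * x) * (1 - p ^ Suc j / x)) (Suc n))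
       = (\<lambda>j. (1 - p ^ (j + 1) * x) * (1 - p ^ Suc (j + 1) / x))" by simp
  with h1 have "(\<lambda>n. (\<lambda>j. (1 - p ^ j * x) * (1 - p ^ Suc j / x)) (Suc n)) has_prod thk p 1 x" by simp
  from has_prod_Suc_imp[OF this]
  have "(\<lambda>j. (1 - p ^ j * x) * (1 - p ^ Suc j / x)) has_prod (thk p 1 x * ((1 - x) * (1 - p / x)))"
    by simp
  with th_has_prod[OF p x] show ?thesis using has_prod_unique2 by blast
qed

lemma thk1_nz:
  fixes p :: complex assumes p: "norm p < 1"
  shows "thk p 1 1 \<noteq> 0"
proof -
  have h1: "(\<lambda>j. (1 - p ^ (j + 1) * 1) * (1 - p ^ Suc (j + 1) / 1)) has_prod thk p 1 1"
    by (rule thk_has_prod[OF p]) simp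
  have nz: "p ^ Suc m \<noteq> 1" for m
  proof
    assume "p ^ Suc m = 1"
    then have "norm p ^ Suc m = 1" by (metis norm_one norm_power)
    moreover have "norm p ^ Suc m < 1"
    proof -
      have "norm p ^ m \<le> 1" by (rule power_le_one) (use p in auto)
      then have "norm p * norm p ^ m \<le> norm p" by (rule mult_left_le) auto
      then show ?thesis using p by simp
    qed
    ultimately show False by simp
  qed
  have "0 \<notin> range (\<lambda>j. (1 - p ^ (j + 1) * 1) * (1 - p ^ Suc (j + 1) / 1))"
  proof
    assume "0 \<in> range (\<lambda>j. (1 - p ^ (j + 1) * 1) * (1 - p ^ Suc (j + 1) / 1))"
    then obtain j where "(1 - p ^ (j + 1) * 1) * (1 - p ^ Suc (j + 1) / 1) = 0" by auto
    then have "p ^ Suc j = 1 \<or> p ^ Suc (Suc j) = 1" by simp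
    with nz show False by blast
  qed
  with has_prod_eq_0_iff[OF h1] show ?thesis by blast
qed

lemma th_deriv_1:
  fixes p :: complex assumes p: "norm p < 1"
  shows "deriv (\<lambda>x. mtheta x p) 1 = - ((1 - p) * thk p 1 1)"
proof -
  have hT: "(thk p 1 has_field_derivative deriv (thk p 1) 1) (at 1)"
    by (rule holomorphic_derivI[OF thk_holo[OF p]]) auto
  have hQ: "((\<lambda>x. (1 - x) * (1 - p / x)) has_field_derivative (- (1 - p))) (at (1::complex))"
    by (rule derivative_eq_intros refl | simp)+
  have hP: "((\<lambda>x. thk p 1 x * ((1 - x) * (1 - p / x))) has_field_derivative
      (deriv (thk p 1) 1 * ((1 - 1) * (1 - p / 1)) + (- (1 - p)) * thk p 1 1)) (at 1)"
    using DERIV_mult[OF hT hQ] by simp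
  have "((\<lambda>x. mtheta x p) has_field_derivative (- ((1 - p) * thk p 1 1))) (at 1)"
  proof (rule has_field_derivative_transform_within_open[of _ _ _ "- {0}"])
    show "((\<lambda>x. thk p 1 x * ((1 - x) * (1 - p / x))) has_field_derivative - ((1 - p) * thk p 1 1)) (at 1)"
      using hP by (simp add: algebra_simps)
  qed (use th_head[OF _ p] in auto)
  then show ?thesis by (rule DERIV_imp_deriv)
qed

lemma th_deriv_shift:
  fixes p x :: complex assumes x: "x \<noteq> 0" and p: "p \<noteq> 0" "norm p < 1" and z: "mtheta x p = 0"
  shows "p * deriv (\<lambda>x. mtheta x p) (p * x) = - deriv (\<lambda>x. mtheta x p) x / x"
proof -
  have px: "p * x \<noteq> 0" using x p by auto
  have hA: "((\<lambda>y. mtheta (p * y) p) has_field_derivative (deriv (\<lambda>x. mtheta x p) (p * x) * p)) (at x)"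
  proof (rule DERIV_chain2[of "\<lambda>x. mtheta x p"])
    show "((\<lambda>x. mtheta x p) has_field_derivative deriv (\<lambda>x. mtheta x p) (p * x)) (at (p * x))"
      by (rule holomorphic_derivI[OF th_holo[OF p(2)]]) (use px in auto)
    show "((*) p has_field_derivative p) (at x)"
      by (rule derivative_eq_intros refl | simp)+
  qed
  have hB0: "((\<lambda>y. - mtheta y p / y) has_field_derivative
       ((- deriv (\<lambda>x. mtheta x p) x) * x - (- mtheta x p) * 1) / (x * x)) (at x)"
  proof (rule DERIV_divide)
    show "((\<lambda>y. - mtheta y p) has_field_derivative - deriv (\<lambda>x. mtheta x p) x) (at x)"
      by (intro DERIV_minus holomorphic_derivI[OF th_holo[OF p(2)]]) (use x in auto)
  qed (use x in \<open>auto intro: DERIV_ident\<close>)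
  have hB: "((\<lambda>y. mtheta (p * y) p) has_field_derivative
       ((- deriv (\<lambda>x. mtheta x p) x) * x - (- mtheta x p) * 1) / (x * x)) (at x)"
    by (rule has_field_derivative_transform_within_open[OF hB0, of "- {0}"])
       (use x th_shift[OF _ p] in auto)
  have "deriv (\<lambda>x. mtheta x p) (p * x) * p = ((- deriv (\<lambda>x. mtheta x p) x) * x - (- mtheta x p) * 1) / (x * x)"
    using DERIV_unique[OF hA hB] .
  then show ?thesis using x z by (simp add: field_simps)
qed

lemma th_deriv_nz_pow:
  fixes p :: complex assumes p: "p \<noteq> 0" "norm p < 1"
  shows "deriv (\<lambda>x. mtheta x p) (p ^ n) \<noteq> 0 \<and> deriv (\<lambda>x. mtheta x p) (inverse (p ^ n)) \<noteq> 0"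
proof (induction n)
  case 0
  have "1 - p \<noteq> 0" using p by auto
  then show ?case using th_deriv_1[OF p(2)] thk1_nz[OF p(2)] by simp
next
  case (Suc n)
  have z1: "mtheta (p ^ n) p = 0" using th_zero_iff[OF _ p, of "p ^ n"] p
    by (metis power_int_of_nat power_not_zero)
  have s1: "p * deriv (\<lambda>x. mtheta x p) (p * p ^ n) = - deriv (\<lambda>x. mtheta x p) (p ^ n) / p ^ n"
    by (rule th_deriv_shift[OF _ p z1]) (use p in simp)
  have A: "deriv (\<lambda>x. mtheta x p) (p ^ Suc n) \<noteq> 0"
    using s1 Suc.IH p by auto
  define y where "y = inverse (p ^ Suc n)"
  have y0: "y \<noteq> 0" using p by (simp add: y_def)
  have py: "p * y = inverse (p ^ n)" using p
    by (simp add: y_def field_simps)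
  have "y = p powi (- int (Suc n))" unfolding y_def by (simp only: power_int_minus power_int_of_nat)
  then have z2: "mtheta y p = 0" using th_zero_iff[OF y0 p] by blast
  have s2: "p * deriv (\<lambda>x. mtheta x p) (p * y) = - deriv (\<lambda>x. mtheta x p) y / y"
    by (rule th_deriv_shift[OF y0 p z2])
  have B: "deriv (\<lambda>x. mtheta x p) y \<noteq> 0"
    using s2 Suc.IH p unfolding py by auto
  show ?case using A B y_def by simp
qed

lemma th_deriv_nz:
  fixes p x :: complex assumes x: "x \<noteq> 0" and p: "p \<noteq> 0" "norm p < 1" and z: "mtheta x p = 0"
  shows "deriv (\<lambda>x. mtheta x p) x \<noteq> 0"
proof -
  obtain m :: int where m: "x = p powi m" using th_zero_iff[OF x p] z by blast
  show ?thesis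
  proof (cases "m \<ge> 0")
    case True
    then have e: "m = int (nat m)" by simp
    have "x = p ^ nat m" using m by (subst (asm) e) (simp only: power_int_of_nat)
    then show ?thesis using th_deriv_nz_pow[OF p] by simp
  next
    case False
    then have e: "m = - int (nat (- m))" by simp
    have "x = inverse (p ^ nat (- m))" using m by (subst (asm) e) (simp only: power_int_minus power_int_of_nat)
    then show ?thesis using th_deriv_nz_pow[OF p] by simp
  qed
qed

lemma per_pow:
  fixes G :: "complex \<Rightarrow> complex" and p :: complex
  assumes p: "p \<noteq> 0" and per: "\<And>w. w \<noteq> 0 \<Longrightarrow> G (p * w) = G w" and w: "w \<noteq> 0"
  shows "G (p ^ k * w) = G w \<and> G (inverse (p ^ k) * w) = G w"
proof (induction k)
  case 0 then show ?case by simp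
next
  case (Suc k)
  have a: "G (p ^ Suc k * w) = G (p ^ k * w)"
    using per[of "p ^ k * w"] p w by (simp add: mult.assoc)
  have b: "G (p * (inverse (p ^ Suc k) * w)) = G (inverse (p ^ Suc k) * w)"
    using per[of "inverse (p ^ Suc k) * w"] p w by simp
  have c: "p * (inverse (p ^ Suc k) * w) = inverse (p ^ k) * w" using p by (simp add: field_simps)
  have b': "G (inverse (p ^ Suc k) * w) = G (inverse (p ^ k) * w)" using b unfolding c by simp
  show ?case using a b' Suc.IH by metis
qed

lemma per_const:
  fixes G :: "complex \<Rightarrow> complex" and p :: complex
  assumes p: "p \<noteq> 0" "norm p < 1" and hol: "G holomorphic_on (- {0})"
    and per: "\<And>w. w \<noteq> 0 \<Longrightarrow> G (p * w) = G w" and w: "w \<noteq> 0" and w1: "w1 \<noteq> 0"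
  shows "G w = G w1"
proof -
  define A where "A = {w::complex. norm p \<le> norm w \<and> norm w \<le> 1}"
  have A0: "A \<subseteq> - {0}" using p by (auto simp: A_def)
  have cA: "compact A"
  proof -
    have "A = cball 0 1 - ball 0 (norm p)" by (auto simp: A_def)
    then show ?thesis by (simp add: compact_diff)
  qed
  have "continuous_on A G"
    using holomorphic_on_imp_continuous_on[OF hol] A0 continuous_on_subset by blast
  then have "compact (G ` A)" using cA compact_continuous_image by blast
  then obtain M where M: "\<And>v. v \<in> A \<Longrightarrow> norm (G v) \<le> M"
    using compact_imp_bounded bounded_iff by (metis imageI)
  have red: "\<exists>v\<in>A. G v = G u" if u: "u \<noteq> 0" for u
  proof -
    define L where "L = - ln (norm p)"
    have L: "L > 0" using p by (simp add: L_def)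
    define k where "k = ceiling (ln (norm u) / L)"
    have k1: "ln (norm u) \<le> k * L" using L by (simp add: k_def pos_divide_le_eq[symmetric])
    have k2: "k * L < ln (norm u) + L"
    proof -
      have "of_int k < ln (norm u) / L + 1" unfolding k_def by linarith
      then show ?thesis using L by (simp add: field_simps)
    qed
    have np: "norm p = exp (- L)" using p by (simp add: L_def)
    show ?thesis
    proof (cases "k \<ge> 0")
      case True
      define v where "v = p ^ nat k * u"
      have e1: "norm p ^ nat k = exp (- (k * L))"
        using True by (simp add: np exp_of_nat_mult[symmetric])
      have "norm v = exp (- (k * L)) * exp (ln (norm u))"
        using u by (simp add: v_def norm_mult norm_power e1)
      also have "\<dots> = exp (ln (norm u) - k * L)" by (simp add: exp_add[symmetric])
      finally have "norm v = exp (ln (norm u) - k * L)" .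
      then have "norm v \<le> 1 \<and> norm p \<le> norm v" using k1 k2 np by simp
      moreover have "G v = G u" using per_pow[of p G u, OF p(1) per u] by (simp add: v_def)
      ultimately show ?thesis by (auto simp: A_def)
    next
      case False
      define v where "v = inverse (p ^ nat (- k)) * u"
      have e1: "norm p ^ nat (- k) = exp (k * L)"
        using False by (simp add: np exp_of_nat_mult[symmetric])
      have "norm v = inverse (exp (k * L)) * exp (ln (norm u))"
        using u by (simp add: v_def norm_mult norm_power e1 norm_inverse)
      also have "\<dots> = exp (ln (norm u) - k * L)" by (simp add: exp_add[symmetric] exp_minus[symmetric])
      finally have "norm v = exp (ln (norm u) - k * L)" .
      then have "norm v \<le> 1 \<and> norm p \<le> norm v" using k1 k2 np by simp
      moreover have "G v = G u" using per_pow[of p G u, OF p(1) per u] by (simp add: v_def)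
      ultimately show ?thesis by (auto simp: A_def)
    qed
  qed
  have hK: "(\<lambda>s. G (exp s)) holomorphic_on UNIV"
    by (rule holomorphic_on_compose_gen[unfolded o_def, OF holomorphic_on_exp hol]) auto
  have bK: "bounded (range (\<lambda>s. G (exp s)))"
    unfolding bounded_iff
  proof (intro exI ballI)
    fix y assume "y \<in> range (\<lambda>s. G (exp s))"
    then obtain s where s: "y = G (exp s)" by auto
    obtain v where "v \<in> A" "G v = G (exp s)" using red[of "exp s"] by auto
    then show "norm y \<le> M" using M[of v] s by simp
  qed
  from Liouville_theorem[OF hK bK] obtain c where c: "\<And>s. G (exp s) = c"
    by (auto simp: constant_on_def)
  show ?thesis using c[of "Ln w"] c[of "Ln w1"] w w1 by (simp add: exp_Ln)
qed


definition Vn :: "complex \<Rightarrow> nat \<Rightarrow> (complex \<Rightarrow> complex) \<Rightarrow> bool" where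
  "Vn p n G \<longleftrightarrow> G holomorphic_on (- {0}) \<and> (\<forall>w. w \<noteq> 0 \<longrightarrow> G (1 / w) = G w) \<and>
     (\<forall>w. w \<noteq> 0 \<longrightarrow> G (p * w) = inverse (p ^ n) * inverse (w ^ (2 * n)) * G w)"

lemma V_zero_shift:
  assumes G: "Vn p n G" and p: "p \<noteq> 0" and y: "y \<noteq> 0" "G y = 0"
  shows "G (p ^ k * y) = 0 \<and> G (inverse (p ^ k) * y) = 0"
proof (induction k)
  case 0 then show ?case using y by simp
next
  case (Suc k)
  have per: "\<And>w. w \<noteq> 0 \<Longrightarrow> G (p * w) = inverse (p ^ n) * inverse (w ^ (2 * n)) * G w"
    using G by (auto simp: Vn_def)
  have a: "G (p ^ Suc k * y) = inverse (p ^ n) * inverse ((p ^ k * y) ^ (2 * n)) * G (p ^ k * y)"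
    using per[of "p ^ k * y"] p y by (simp add: mult.assoc)
  have b: "G (p * (inverse (p ^ Suc k) * y)) = inverse (p ^ n) * inverse ((inverse (p ^ Suc k) * y) ^ (2 * n)) * G (inverse (p ^ Suc k) * y)"
    using per[of "inverse (p ^ Suc k) * y"] p y by simp
  have c: "p * (inverse (p ^ Suc k) * y) = inverse (p ^ k) * y" using p by (simp add: field_simps)
  have b': "G (inverse (p ^ k) * y) = inverse (p ^ n) * inverse ((inverse (p ^ Suc k) * y) ^ (2 * n)) * G (inverse (p ^ Suc k) * y)"
    using b unfolding c .
  have nz: "inverse (p ^ n) * inverse ((inverse (p ^ Suc k) * y) ^ (2 * n)) \<noteq> 0" using p y by simp
  have A: "G (p ^ Suc k * y) = 0" using a Suc.IH by simp
  have B: "G (inverse (p ^ Suc k) * y) = 0" using b' Suc.IH nz by (metis mult_eq_0_iff)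
  show ?case using A B by blast
qed

lemma V_zero_int:
  assumes G: "Vn p n G" and p: "p \<noteq> 0" and y: "y \<noteq> 0" "G y = 0"
  shows "G (p powi m * y) = 0"
proof (cases "m \<ge> 0")
  case True
  then have e: "p powi m = p ^ nat m" by (metis nat_0_le power_int_of_nat)
  show ?thesis unfolding e using V_zero_shift[OF G p y] by blast
next
  case False
  then have e: "p powi m = inverse (p ^ nat (- m))"
    by (metis (no_types, lifting) minus_minus nat_0_le neg_0_le_iff_le nle_le power_int_minus power_int_of_nat)
  show ?thesis unfolding e using V_zero_shift[OF G p y] by blast
qed

lemma cont_eq_at:
  fixes f g :: "complex \<Rightarrow> complex"
  assumes "isCont f w0" "isCont g w0" "eventually (\<lambda>w. f w = g w) (at w0)"
  shows "f w0 = g w0"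
proof -
  have "(f \<longlongrightarrow> f w0) (at w0)" using assms(1) isCont_def by blast
  moreover have "(f \<longlongrightarrow> g w0) (at w0)"
    using Lim_transform_eventually[OF assms(2)[unfolded isCont_def]] assms(3)
    by (simp add: eventually_mono)
  ultimately show ?thesis using tendsto_unique[OF trivial_limit_at] by blast
qed

lemma holo_isCont: "f holomorphic_on (- {0}) \<Longrightarrow> w \<noteq> 0 \<Longrightarrow> isCont f w"
  by (metis ComplI closed_singleton continuous_on_eq_continuous_at holomorphic_on_imp_continuous_on open_Compl singletonD)


lemma th_holo_comp:
  assumes p: "norm p < 1" and hf: "f holomorphic_on S" and nz: "\<And>w. w \<in> S \<Longrightarrow> f w \<noteq> 0"
  shows "(\<lambda>w. mtheta (f w) p) holomorphic_on S"
  using holomorphic_on_compose_gen[OF hf th_holo[OF p], unfolded o_def] nz by (auto simp: image_iff)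

lemma th_zero_both:
  assumes p: "p \<noteq> 0" "norm p < 1" and y: "y \<noteq> 0" "mtheta (y ^ 2) p \<noteq> 0" and w: "w \<noteq> 0"
  shows "\<not> (mtheta (y * w) p = 0 \<and> mtheta (y / w) p = 0)"
proof
  assume a: "mtheta (y * w) p = 0 \<and> mtheta (y / w) p = 0"
  obtain m1 :: int where m1: "y * w = p powi m1" using a th_zero_iff[of "y * w" p] p y w by auto
  obtain m2 :: int where m2: "y / w = p powi m2" using a th_zero_iff[of "y / w" p] p y w by auto
  have "y ^ 2 = (y * w) * (y / w)" using w by (simp add: power2_eq_square)
  also have "\<dots> = p powi (m1 + m2)" using m1 m2 p by (simp add: power_int_add)
  finally have "mtheta (y ^ 2) p = 0" using th_zero_iff[of "y ^ 2" p] p y by auto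
  with y show False by simp
qed

lemma divide_lemma:
  assumes p: "p \<noteq> 0" "norm p < 1" and G: "Vn p (Suc n) G"
    and y: "y \<noteq> 0" "mtheta (y ^ 2) p \<noteq> 0" "G y = 0"
  shows "\<exists>H. Vn p n H \<and> (\<forall>w. w \<noteq> 0 \<longrightarrow> G w = H w * (mtheta (y * w) p * mtheta (y / w) p))"
proof -
  define Dn where "Dn = (\<lambda>w. mtheta (y * w) p * mtheta (y / w) p)"
  have hG: "G holomorphic_on - {0}" using G by (simp add: Vn_def)
  have hD: "Dn holomorphic_on - {0}"
    unfolding Dn_def
    by (intro holomorphic_on_mult th_holo_comp[OF p(2)] holomorphic_intros) (use y in auto)
  have Gz: "G w = 0" if w: "w \<noteq> 0" "Dn w = 0" for w
  proof -
    have "mtheta (y * w) p = 0 \<or> mtheta (y / w) p = 0" using w by (simp add: Dn_def)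
    then show ?thesis
    proof
      assume "mtheta (y * w) p = 0"
      then obtain m :: int where m: "y * w = p powi m" using th_zero_iff[of "y * w" p] p y w by auto
      have "1 / w = p powi (- m) * y" using m w y p by (simp add: power_int_minus field_simps)
      then have "G (1 / w) = 0" using V_zero_int[OF G p(1) y(1) y(3)] by simp
      then show ?thesis using G w by (simp add: Vn_def)
    next
      assume "mtheta (y / w) p = 0"
      then obtain m :: int where m: "y / w = p powi m" using th_zero_iff[of "y / w" p] p y w by auto
      have "w = p powi (- m) * y" using m w y p by (simp add: power_int_minus field_simps)
      then show ?thesis using V_zero_int[OF G p(1) y(1) y(3)] by simp
    qed
  qed
  define T where "T = (\<lambda>x. mtheta x p)"
  have dD: "(Dn has_field_derivative
      (deriv T (y * w) * y * T (y / w) + T (y * w) * (deriv T (y / w) * (- y / w ^ 2)))) (at w)"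
    if w: "w \<noteq> 0" for w
  proof -
    have dT: "(T has_field_derivative deriv T x) (at x)" if "x \<noteq> 0" for x
      unfolding T_def by (rule holomorphic_derivI[OF th_holo[OF p(2)]]) (use that in auto)
    have d1: "((\<lambda>w. T (y * w)) has_field_derivative deriv T (y * w) * y) (at w)"
      by (rule DERIV_chain2[OF dT]) (use y w in \<open>auto intro!: derivative_eq_intros\<close>)
    have d2: "((\<lambda>w. T (y / w)) has_field_derivative deriv T (y / w) * (- y / w ^ 2)) (at w)"
    proof (rule DERIV_chain2[OF dT])
      show "y / w \<noteq> 0" using y w by auto
      show "((\<lambda>w. y / w) has_field_derivative - y / w\<^sup>2) (at w)"
        using w by (auto intro!: derivative_eq_intros simp: power2_eq_square field_simps)
    qed
    show ?thesis using DERIV_mult[OF d1 d2] unfolding Dn_def T_def by (simp add: algebra_simps)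
  qed
  have dDnz: "deriv Dn w \<noteq> 0" if w: "w \<noteq> 0" "Dn w = 0" for w
  proof -
    have e: "deriv Dn w = deriv T (y * w) * y * T (y / w) + T (y * w) * (deriv T (y / w) * (- y / w ^ 2))"
      by (rule DERIV_imp_deriv[OF dD[OF w(1)]])
    have nb: "\<not> (T (y * w) = 0 \<and> T (y / w) = 0)"
      using th_zero_both[OF p y(1,2) w(1)] unfolding T_def .
    have "T (y * w) = 0 \<or> T (y / w) = 0" using w by (simp add: Dn_def T_def)
    then show ?thesis
    proof
      assume a: "T (y * w) = 0"
      then have "T (y / w) \<noteq> 0" using nb by blast
      moreover have "deriv T (y * w) \<noteq> 0"
        unfolding T_def by (rule th_deriv_nz) (use a p y w in \<open>auto simp: T_def\<close>)
      ultimately show ?thesis using e a y by simp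
    next
      assume a: "T (y / w) = 0"
      then have "T (y * w) \<noteq> 0" using nb by blast
      moreover have "deriv T (y / w) \<noteq> 0"
        unfolding T_def by (rule th_deriv_nz) (use a p y w in \<open>auto simp: T_def\<close>)
      ultimately show ?thesis using e a y w by simp
    qed
  qed
  have iso: "eventually (\<lambda>w. w \<noteq> 0 \<and> Dn w \<noteq> 0) (at w0)" if w0: "w0 \<noteq> 0" for w0
  proof -
    have ev0: "eventually (\<lambda>w. w \<noteq> 0) (at w0)"
    proof -
      have "eventually (\<lambda>w. w \<in> - {0}) (nhds w0)"
        using w0 by (intro eventually_nhds_in_open) auto
      then show ?thesis by (auto simp: eventually_at_filter elim: eventually_mono)
    qed
    show ?thesis
    proof (cases "Dn w0 = 0")
      case False
      have "isCont Dn w0" by (rule holo_isCont[OF hD w0])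
      then have "(Dn \<longlongrightarrow> Dn w0) (at w0)" by (simp add: isCont_def)
      then have "eventually (\<lambda>w. Dn w \<noteq> 0) (at w0)"
        using False by (rule tendsto_imp_eventually_ne)
      with ev0 show ?thesis by (auto elim: eventually_elim2)
    next
      case True
      have "((\<lambda>w. (Dn w - Dn w0) / (w - w0)) \<longlongrightarrow> deriv Dn w0) (at w0)"
        using dD[OF w0] DERIV_imp_deriv[OF dD[OF w0]] has_field_derivative_iff by fastforce
      then have "eventually (\<lambda>w. (Dn w - Dn w0) / (w - w0) \<noteq> 0) (at w0)"
        using dDnz[OF w0 True] by (rule tendsto_imp_eventually_ne)
      then have "eventually (\<lambda>w. Dn w \<noteq> 0) (at w0)"
        using True by (auto elim: eventually_mono)
      with ev0 show ?thesis by (auto elim: eventually_elim2)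
    qed
  qed
  define H where "H = (\<lambda>w. if Dn w = 0 then deriv G w / deriv Dn w else G w / Dn w)"
  have GHD: "G w = H w * Dn w" if "w \<noteq> 0" for w
    using Gz[OF that] by (auto simp: H_def)
  have Hhol: "H holomorphic_on - {0}"
  proof -
    have "H analytic_on - {0}"
      unfolding analytic_on_def
    proof
      fix w0 :: complex assume "w0 \<in> - {0}"
      then have w0: "w0 \<noteq> 0" by simp
      obtain e where e: "e > 0" "\<And>w. w \<noteq> w0 \<Longrightarrow> dist w w0 < e \<Longrightarrow> w \<noteq> 0 \<and> Dn w \<noteq> 0"
        using iso[OF w0] unfolding eventually_at by blast
      define r where "r = min e (norm w0)"
      have r: "r > 0" using e w0 by (simp add: r_def)
      have sub: "ball w0 r \<subseteq> - {0}" by (auto simp: r_def dist_norm)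
      have nzb: "Dn w \<noteq> 0" if "w \<in> ball w0 r - {w0}" for w
        using e(2)[of w] that by (auto simp: r_def dist_commute)
      have hq: "(\<lambda>w. G w / Dn w) holomorphic_on (ball w0 r - {w0})"
        by (intro holomorphic_on_divide holomorphic_on_subset[OF hG] holomorphic_on_subset[OF hD])
           (use sub nzb in auto)
      have hH1: "H holomorphic_on (ball w0 r - {w0})"
        by (rule holomorphic_transform[OF hq]) (use nzb in \<open>auto simp: H_def\<close>)
      have limH: "(H \<longlongrightarrow> H w0) (at w0)"
      proof (cases "Dn w0 = 0")
        case True
        have "((\<lambda>w. G w / Dn w) \<longlongrightarrow> deriv G w0 / deriv Dn w0) (at w0)"
        proof (rule lhopital_complex_simple)
          show "(G has_field_derivative deriv G w0) (at w0)"
            by (rule holomorphic_derivI[OF hG]) (use w0 in auto)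
          show "(Dn has_field_derivative deriv Dn w0) (at w0)"
            using dD[OF w0] DERIV_imp_deriv[OF dD[OF w0]] by simp
        qed (use Gz[OF w0 True] True dDnz[OF w0 True] in auto)
        moreover have "eventually (\<lambda>w. G w / Dn w = H w) (at w0)"
          using iso[OF w0] by (auto simp: H_def elim: eventually_mono)
        ultimately show ?thesis using True by (simp add: H_def Lim_transform_eventually)
      next
        case False
        have "isCont (\<lambda>w. G w / Dn w) w0"
          using holo_isCont[OF hG w0] holo_isCont[OF hD w0] False by (intro continuous_intros) auto
        then have "((\<lambda>w. G w / Dn w) \<longlongrightarrow> H w0) (at w0)" using False by (simp add: H_def isCont_def)
        moreover have "eventually (\<lambda>w. G w / Dn w = H w) (at w0)"
          using iso[OF w0] by (auto simp: H_def elim: eventually_mono)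
        ultimately show ?thesis by (simp add: Lim_transform_eventually)
      qed
      have "H holomorphic_on ball w0 r"
      proof (rule no_isolated_singularity'[of "{w0}"])
        show "(H \<longlongrightarrow> H z) (at z within ball w0 r)" if "z \<in> {w0}" for z
          using limH that tendsto_within_subset by blast
      qed (use hH1 in auto)
      then show "\<exists>e>0. H holomorphic_on ball w0 e" using r by blast
    qed
    then show ?thesis by (rule analytic_imp_holomorphic)
  qed
  have Hc: "isCont H w" if "w \<noteq> 0" for w by (rule holo_isCont[OF Hhol that])
  have Dinv: "Dn (1 / w) = Dn w" if "w \<noteq> 0" for w
    using that by (simp add: Dn_def mult.commute)
  have Dper: "Dn (p * w) = Dn w / (p * w ^ 2)" if w: "w \<noteq> 0" for w
  proof -
    have a: "mtheta (y * (p * w)) p = - mtheta (y * w) p / (y * w)"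
      using th_shift[of "y * w" p] p y w by (simp add: mult_ac)
    have b0: "mtheta (p * (y / (p * w))) p = - mtheta (y / (p * w)) p / (y / (p * w))"
      using th_shift[of "y / (p * w)" p] p y w by simp
    have "p * (y / (p * w)) = y / w" using p w by simp
    then have b: "mtheta (y / (p * w)) p = - (y / (p * w)) * mtheta (y / w) p"
      using b0 p y w by (simp add: field_simps)
    show ?thesis unfolding Dn_def a b using p y w by (simp add: field_simps power2_eq_square)
  qed
  have Hinv: "H (1 / w) = H w" if w: "w \<noteq> 0" for w
  proof -
    have gen: "H (1 / v) = H v" if v: "v \<noteq> 0" "Dn v \<noteq> 0" for v
      using v Dinv[OF v(1)] G by (simp add: H_def Vn_def)
    have c1: "isCont (\<lambda>v. H (1 / v)) w"
      by (rule continuous_at_compose[unfolded o_def, OF _ Hc]) (use w in \<open>auto intro!: continuous_intros\<close>)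
    have c2: "isCont H w" by (rule Hc[OF w])
    have ev: "\<forall>\<^sub>F v in at w. H (1 / v) = H v"
      using iso[OF w] by (auto elim: eventually_mono intro: gen)
    show ?thesis using cont_eq_at[OF c1 c2 ev] by simp
  qed
  have Hper: "H (p * w) = inverse (p ^ n) * inverse (w ^ (2 * n)) * H w" if w: "w \<noteq> 0" for w
  proof -
    have gen: "H (p * v) = inverse (p ^ n) * inverse (v ^ (2 * n)) * H v" if v: "v \<noteq> 0" "Dn v \<noteq> 0" for v
    proof -
      have Dp: "Dn (p * v) \<noteq> 0" using Dper[OF v(1)] v p by simp
      have Gp: "G (p * v) = inverse (p ^ Suc n) * inverse (v ^ (2 * Suc n)) * G v"
        using G v by (simp add: Vn_def)
      show ?thesis using Dp v p unfolding H_def Gp Dper[OF v(1)]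
        by (simp add: field_simps power2_eq_square)
    qed
    have c1: "isCont (\<lambda>v. H (p * v)) w"
      by (rule continuous_at_compose[unfolded o_def, OF _ Hc]) (use w p in \<open>auto intro!: continuous_intros\<close>)
    have c2: "isCont (\<lambda>v. inverse (p ^ n) * inverse (v ^ (2 * n)) * H v) w"
      using w Hc[OF w] by (auto intro!: continuous_intros)
    have ev: "\<forall>\<^sub>F v in at w. H (p * v) = inverse (p ^ n) * inverse (v ^ (2 * n)) * H v"
      using iso[OF w] by (auto elim: eventually_mono intro: gen)
    show ?thesis using cont_eq_at[OF c1 c2 ev] by simp
  qed
  have "Vn p n H" using Hhol Hinv Hper by (simp add: Vn_def)
  moreover have "\<forall>w. w \<noteq> 0 \<longrightarrow> G w = H w * (mtheta (y * w) p * mtheta (y / w) p)"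
    using GHD by (simp add: Dn_def)
  ultimately show ?thesis by blast
qed


lemma vanish:
  assumes p: "p \<noteq> 0" "norm p < 1"
  shows "Vn p n G \<Longrightarrow> (\<forall>j\<le>n. ys j \<noteq> 0 \<and> mtheta ((ys j) ^ 2) p \<noteq> 0 \<and> G (ys j) = 0)
    \<Longrightarrow> (\<forall>i\<le>n. \<forall>j\<le>n. i \<noteq> j \<longrightarrow> mtheta (ys i * ys j) p \<noteq> 0 \<and> mtheta (ys i / ys j) p \<noteq> 0)
    \<Longrightarrow> w \<noteq> 0 \<Longrightarrow> G w = 0"
proof (induction n arbitrary: G w)
  case 0
  have hol: "G holomorphic_on - {0}" and per: "\<And>v. v \<noteq> 0 \<Longrightarrow> G (p * v) = G v"
    using "0.prems"(1) by (auto simp: Vn_def)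
  have "G w = G (ys 0)"
    by (rule per_const[OF p hol per]) (use "0.prems" in auto)
  then show ?case using "0.prems" by auto
next
  case (Suc n)
  define y where "y = ys (Suc n)"
  have y: "y \<noteq> 0" "mtheta (y ^ 2) p \<noteq> 0" "G y = 0" using Suc.prems(2) by (auto simp: y_def)
  obtain H where H: "Vn p n H" "\<And>v. v \<noteq> 0 \<Longrightarrow> G v = H v * (mtheta (y * v) p * mtheta (y / v) p)"
    using divide_lemma[OF p Suc.prems(1) y] by blast
  have Hz: "\<forall>j\<le>n. ys j \<noteq> 0 \<and> mtheta ((ys j) ^ 2) p \<noteq> 0 \<and> H (ys j) = 0"
  proof (intro allI impI)
    fix j assume j: "j \<le> n"
    have a: "ys j \<noteq> 0 \<and> mtheta ((ys j) ^ 2) p \<noteq> 0 \<and> G (ys j) = 0" using Suc.prems(2) j by auto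
    have b: "mtheta (y * ys j) p \<noteq> 0 \<and> mtheta (y / ys j) p \<noteq> 0"
    proof -
      have "Suc n \<le> Suc n" "j \<le> Suc n" "Suc n \<noteq> j" using j by auto
      then show ?thesis using Suc.prems(3) unfolding y_def by blast
    qed
    have "G (ys j) = H (ys j) * (mtheta (y * ys j) p * mtheta (y / ys j) p)" using H(2) a by blast
    then show "ys j \<noteq> 0 \<and> mtheta ((ys j) ^ 2) p \<noteq> 0 \<and> H (ys j) = 0" using a b by simp
  qed
  have "H w = 0"
    by (rule Suc.IH[OF H(1) Hz]) (use Suc.prems(3,4) in auto)
  then show ?case using H(2)[OF Suc.prems(4)] by simp
qed

lemma tpoch_add: "tpoch a q p (m + l) = tpoch a q p m * tpoch (a * q ^ m) q p l"
proof (induction l)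
  case 0 then show ?case by (simp add: tpoch_def)
next
  case (Suc l)
  have "tpoch a q p (m + Suc l) = tpoch a q p (m + l) * mtheta (a * q ^ (m + l)) p"
    by (simp add: tpoch_def)
  also have "\<dots> = tpoch a q p m * (tpoch (a * q ^ m) q p l * mtheta (a * q ^ m * q ^ l) p)"
    using Suc.IH by (simp add: power_add mult_ac)
  also have "\<dots> = tpoch a q p m * tpoch (a * q ^ m) q p (Suc l)"
    by (simp add: tpoch_def)
  finally show ?case .
qed

lemma tpoch_nz_le: "tpoch a q p n \<noteq> 0 \<Longrightarrow> k \<le> n \<Longrightarrow> tpoch a q p k \<noteq> 0"
  using tpoch_add[of a q p k "n - k"] by auto

lemma tpoch_nz_factor: "tpoch a q p n \<noteq> 0 \<Longrightarrow> i < n \<Longrightarrow> mtheta (a * q ^ i) p \<noteq> 0"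
  by (auto simp: tpoch_def)

lemma tpoch_zero_factor: "i < n \<Longrightarrow> mtheta (a * q ^ i) p = 0 \<Longrightarrow> tpoch a q p n = 0"
  by (auto simp: tpoch_def intro: prod_zero)

lemma tpoch_refl:
  assumes q: "q \<noteq> 0" and x: "x \<noteq> 0" and yx: "y * x * q ^ j = q" and p: "p \<noteq> 0" "norm p < 1"
  shows "tpoch y q p j = (\<Prod>i<j. - (y * q ^ i)) * tpoch x q p j"
proof -
  have y: "y \<noteq> 0" using yx q by auto
  have f: "mtheta (y * q ^ i) p = - (y * q ^ i) * mtheta (x * q ^ (j - Suc i)) p" if i: "i < j" for i
  proof -
    have u: "y * q ^ i \<noteq> 0" using y q by simp
    have e: "1 / (y * q ^ i) = x * q ^ (j - Suc i)"
    proof -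
      have "q ^ j = q ^ (j - Suc i) * q ^ i * q" using i
        by (metis Suc_leI le_add_diff_inverse2 power_Suc power_add mult.commute mult.left_commute)
      then have "y * x * q ^ (j - Suc i) * q ^ i * q = q" using yx by (simp add: mult_ac)
      then show ?thesis using q y by (simp add: field_simps)
    qed
    have "mtheta (1 / (y * q ^ i)) p = - mtheta (y * q ^ i) p / (y * q ^ i)"
      by (rule th_inv[OF u p])
    then show ?thesis unfolding e using u by (simp add: field_simps)
  qed
  have "tpoch y q p j = (\<Prod>i<j. - (y * q ^ i) * mtheta (x * q ^ (j - Suc i)) p)"
    unfolding tpoch_def using f by (intro prod.cong) auto
  also have "\<dots> = (\<Prod>i<j. - (y * q ^ i)) * (\<Prod>i<j. mtheta (x * q ^ (j - Suc i)) p)"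
    by (rule prod.distrib)
  also have "(\<Prod>i<j. mtheta (x * q ^ (j - Suc i)) p) = tpoch x q p j"
    unfolding tpoch_def by (rule prod.nat_diff_reindex)
  finally show ?thesis .
qed

lemma prod_neg_pow: "(\<Prod>i<j. - (y * q ^ i)) = (- y) ^ j * (\<Prod>i<j. (q::complex) ^ i)"
  by (induction j) (auto simp: mult_ac)

lemma Vn_const: "Vn p 0 (\<lambda>_. c)"
  by (simp add: Vn_def)

lemma Vn_scale: "Vn p n G \<Longrightarrow> Vn p n (\<lambda>w. c * G w)"
  by (auto simp: Vn_def holomorphic_intros)

lemma Vn_add: "Vn p n G \<Longrightarrow> Vn p n H \<Longrightarrow> Vn p n (\<lambda>w. G w + H w)"
  by (auto simp: Vn_def holomorphic_intros algebra_simps)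

lemma Vn_diff: "Vn p n G \<Longrightarrow> Vn p n H \<Longrightarrow> Vn p n (\<lambda>w. G w - H w)"
  by (auto simp: Vn_def holomorphic_intros algebra_simps)

lemma Vn_sum: "finite A \<Longrightarrow> (\<And>k. k \<in> A \<Longrightarrow> Vn p n (G k)) \<Longrightarrow> Vn p n (\<lambda>w. \<Sum>k\<in>A. G k w)"
proof (induction A rule: finite_induct)
  case empty
  then show ?case using Vn_const[of p 0] by (simp add: Vn_def)
next
  case (insert x F)
  then show ?case using Vn_add[of p n "G x" "\<lambda>w. \<Sum>k\<in>F. G k w"] by simp
qed

lemma Vn_mult: "Vn p m G \<Longrightarrow> Vn p k H \<Longrightarrow> Vn p (m + k) (\<lambda>w. G w * H w)"
  by (auto simp: Vn_def holomorphic_intros power_add field_simps)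

lemma Vn_th:
  assumes p: "p \<noteq> 0" "norm p < 1" and b: "b \<noteq> 0"
  shows "Vn p 1 (\<lambda>w. mtheta (b * w) p * mtheta (b / w) p)"
proof -
  have hol: "(\<lambda>w. mtheta (b * w) p * mtheta (b / w) p) holomorphic_on - {0}"
    by (intro holomorphic_on_mult th_holo_comp[OF p(2)] holomorphic_intros) (use b in auto)
  have per: "mtheta (b * (p * w)) p * mtheta (b / (p * w)) p
      = inverse (p ^ 1) * inverse (w ^ (2 * 1)) * (mtheta (b * w) p * mtheta (b / w) p)"
    if w: "w \<noteq> 0" for w
  proof -
    have a: "mtheta (b * (p * w)) p = - mtheta (b * w) p / (b * w)"
      using th_shift[of "b * w" p] p b w by (simp add: mult_ac)
    have b0: "mtheta (p * (b / (p * w))) p = - mtheta (b / (p * w)) p / (b / (p * w))"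
      using th_shift[of "b / (p * w)" p] p b w by simp
    have "p * (b / (p * w)) = b / w" using p w by simp
    then have bb: "mtheta (b / (p * w)) p = - (b / (p * w)) * mtheta (b / w) p"
      using b0 p b w by (simp add: field_simps)
    show ?thesis unfolding a bb using p b w by (simp add: field_simps power2_eq_square)
  qed
  show ?thesis unfolding Vn_def using hol per by (auto simp: mult.commute)
qed

lemma Vn_tpoch:
  assumes p: "p \<noteq> 0" "norm p < 1" and b: "b \<noteq> 0" and q: "q \<noteq> 0"
  shows "Vn p m (\<lambda>w. tpoch (b * w) q p m * tpoch (b / w) q p m)"
proof (induction m)
  case 0 then show ?case using Vn_const[of p 1] by (simp add: tpoch_def)
next
  case (Suc m)
  have e: "(\<lambda>w. tpoch (b * w) q p (Suc m) * tpoch (b / w) q p (Suc m))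
     = (\<lambda>w. (tpoch (b * w) q p m * tpoch (b / w) q p m) * (mtheta ((b * q ^ m) * w) p * mtheta ((b * q ^ m) / w) p))"
    by (auto simp: tpoch_def fun_eq_iff mult_ac)
  have "Vn p (m + 1) (\<lambda>w. (tpoch (b * w) q p m * tpoch (b / w) q p m) * (mtheta ((b * q ^ m) * w) p * mtheta ((b * q ^ m) / w) p))"
    by (rule Vn_mult[OF Suc.IH Vn_th[OF p]]) (use b q in simp)
  then show ?case unfolding e by simp
qed

lemma alg:
  fixes Aq Qn ACn CAn qj t th0 Nm1 A2 AQC ACQn Qj A2n1 ACj AQ1n CAQj CdAQj A2j Nmj A2r Qr P12 P34 :: complex
  assumes X1: "t * A2 * A2j * A2r = th0 * Aq * A2n1"
    and X2: "Nm1 * Nmj * Qr = P12 * Qn * Qj"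
    and X3: "ACn * ACQn = ACj * CAQj"
    and X4: "AQ1n * CdAQj = P34 * CAn * AQC"
    and X5: "qj * P12 = P34"
    and nz: "th0 \<noteq> 0" "Qj \<noteq> 0" "A2n1 \<noteq> 0" "ACj \<noteq> 0" "AQ1n \<noteq> 0" "CAQj \<noteq> 0" "CdAQj \<noteq> 0" "ACn \<noteq> 0" "CAn \<noteq> 0"
  shows "Aq * Qn / (ACn * CAn) = qj * (t / th0) * (Nm1 * A2 * AQC * ACQn) / (Qj * A2n1 * ACj * AQ1n) / (CAQj * CdAQj) * (A2j * Nmj * A2r * Qr)"
proof -
  have P34: "P34 \<noteq> 0" and AQC: "AQC \<noteq> 0" using X4 nz by auto
  have "qj * (t / th0) * (Nm1 * A2 * AQC * ACQn) / (Qj * A2n1 * ACj * AQ1n) / (CAQj * CdAQj) * (A2j * Nmj * A2r * Qr)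
      = (qj * (t * A2 * A2j * A2r) * (Nm1 * Nmj * Qr) * AQC * ACQn) / (th0 * Qj * A2n1 * ACj * (AQ1n * CdAQj) * CAQj)"
    using nz by (simp add: field_simps)
  also have "\<dots> = (qj * (th0 * Aq * A2n1) * (P12 * Qn * Qj) * AQC * ACQn) / (th0 * Qj * A2n1 * ACj * (P34 * CAn * AQC) * CAQj)"
    unfolding X1 X2 X4 ..
  also have "\<dots> = ((qj * P12) * Aq * Qn * ACQn) / (ACj * P34 * CAn * CAQj)"
    using nz AQC by (simp add: field_simps)
  also have "\<dots> = (Aq * Qn * ACQn) / (ACj * CAn * CAQj)"
    unfolding X5 using P34 by (simp add: field_simps)
  also have "\<dots> = (Aq * Qn * (ACn * ACQn)) / (ACn * ACj * CAn * CAQj)"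
    using nz by (simp add: field_simps)
  also have "\<dots> = Aq * Qn / (ACn * CAn)"
    unfolding X3 using nz by (simp add: field_simps)
  finally show ?thesis by simp
qed


lemma X1:
  assumes j: "j \<le> n"
  shows "mtheta (a ^ 2 * q ^ (2 * j)) p * tpoch (a ^ 2) q p j * tpoch (a * (a * q ^ j)) q p j
        * tpoch (a * q ^ (j + 1) * (a * q ^ j)) q p (n - j)
       = mtheta (a ^ 2) p * tpoch (a ^ 2 * q) q p n * tpoch (a ^ 2 * q ^ (n + 1)) q p j"
proof -
  have e1: "tpoch (a ^ 2) q p (j + j) = tpoch (a ^ 2) q p j * tpoch (a * (a * q ^ j)) q p j"
    using tpoch_add[of "a^2" q p j j] by (simp add: power2_eq_square mult_ac)
  have e2: "tpoch (a ^ 2) q p (Suc (j + j)) = tpoch (a ^ 2) q p (j + j) * mtheta (a ^ 2 * q ^ (2 * j)) p"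
    by (simp add: tpoch_def mult_2)
  have e3: "tpoch (a ^ 2) q p (Suc (j + j) + (n - j)) = tpoch (a ^ 2) q p (Suc (j + j)) * tpoch (a * q ^ (j + 1) * (a * q ^ j)) q p (n - j)"
    using tpoch_add[of "a^2" q p "Suc (j + j)" "n - j"] by (simp add: power2_eq_square power_add mult_ac)
  have e4: "tpoch (a ^ 2) q p (Suc n + j) = tpoch (a ^ 2) q p (Suc n) * tpoch (a ^ 2 * q ^ (n + 1)) q p j"
    using tpoch_add[of "a^2" q p "Suc n" j] by simp
  have e5: "tpoch (a ^ 2) q p (Suc n) = mtheta (a ^ 2) p * tpoch (a ^ 2 * q) q p n"
    using tpoch_add[of "a^2" q p 1 n] by (simp add: tpoch_def)
  have ee: "Suc (j + j) + (n - j) = Suc n + j" using j by simp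
  have "mtheta (a ^ 2 * q ^ (2 * j)) p * tpoch (a ^ 2) q p j * tpoch (a * (a * q ^ j)) q p j
        * tpoch (a * q ^ (j + 1) * (a * q ^ j)) q p (n - j)
      = tpoch (a ^ 2) q p (Suc (j + j)) * tpoch (a * q ^ (j + 1) * (a * q ^ j)) q p (n - j)"
    unfolding e2 e1 by (simp only: mult_ac)
  also have "\<dots> = tpoch (a ^ 2) q p (Suc n + j)" unfolding e3[symmetric] ee ..
  also have "\<dots> = mtheta (a ^ 2) p * tpoch (a ^ 2 * q) q p n * tpoch (a ^ 2 * q ^ (n + 1)) q p j"
    unfolding e4 e5 ..
  finally show ?thesis .
qed

lemma X2:
  assumes j: "j \<le> n" and q: "q \<noteq> 0" and p: "p \<noteq> 0" "norm p < 1" and a: "a \<noteq> 0"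
  shows "tpoch (inverse (q ^ n)) q p j * tpoch (a / (a * q ^ j)) q p j * tpoch (a * q ^ (j + 1) / (a * q ^ j)) q p (n - j)
       = ((\<Prod>i<j. - (inverse (q ^ n) * q ^ i)) * (\<Prod>i<j. - (inverse (q ^ j) * q ^ i)))
         * tpoch q q p n * tpoch q q p j"
proof -
  have r1: "tpoch (inverse (q ^ n)) q p j = (\<Prod>i<j. - (inverse (q ^ n) * q ^ i)) * tpoch (q * q ^ (n - j)) q p j"
  proof (rule tpoch_refl[OF q _ _ p])
    show "q * q ^ (n - j) \<noteq> 0" using q by simp
    have "q ^ n = q ^ (n - j) * q ^ j" using j by (simp add: power_add[symmetric])
    then show "inverse (q ^ n) * (q * q ^ (n - j)) * q ^ j = q" using q by (simp add: field_simps)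
  qed
  have e: "a / (a * q ^ j) = inverse (q ^ j)" using a by (simp add: field_simps)
  have r2: "tpoch (inverse (q ^ j)) q p j = (\<Prod>i<j. - (inverse (q ^ j) * q ^ i)) * tpoch q q p j"
    by (rule tpoch_refl[OF q q _ p]) (use q in simp)
  have e2: "a * q ^ (j + 1) / (a * q ^ j) = q" using a q by (simp add: field_simps)
  have s: "tpoch q q p n = tpoch q q p (n - j) * tpoch (q * q ^ (n - j)) q p j"
    using tpoch_add[of q q p "n - j" j] j by simp
  show ?thesis unfolding e e2 r1 r2 s by (simp add: mult_ac)
qed

lemma X3: "tpoch (a * c) q p n * tpoch (a * c * q ^ n) q p j = tpoch (a * c) q p j * tpoch (c * (a * q ^ j)) q p n"
  using tpoch_add[of "a*c" q p n j] tpoch_add[of "a*c" q p j n] by (simp add: mult_ac add.commute)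

lemma X4:
  assumes j: "j \<le> n" and q: "q \<noteq> 0" and p: "p \<noteq> 0" "norm p < 1" and a: "a \<noteq> 0" and c: "c \<noteq> 0"
  shows "tpoch (a * q powi (1 - int n) / c) q p j * tpoch (c / (a * q ^ j)) q p n
       = ((\<Prod>i<j. - (a * q powi (1 - int n) / c * q ^ i)) * (\<Prod>i<j. - (c / (a * q ^ j) * q ^ i)))
         * tpoch (c / a) q p n * tpoch (a * q / c) q p j"
proof -
  have qi: "q powi (1 - int n) = q / q ^ n" using q power_int_diff[of q 1 "int n"] by simp
  have r1: "tpoch (a * q powi (1 - int n) / c) q p j = (\<Prod>i<j. - (a * q powi (1 - int n) / c * q ^ i)) * tpoch (c / a * q ^ (n - j)) q p j"
  proof (rule tpoch_refl[OF q _ _ p])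
    show "c / a * q ^ (n - j) \<noteq> 0" using q a c by simp
    have "q ^ n = q ^ (n - j) * q ^ j" using j by (simp add: power_add[symmetric])
    then show "a * q powi (1 - int n) / c * (c / a * q ^ (n - j)) * q ^ j = q"
      unfolding qi using q a c by (simp add: field_simps)
  qed
  have s1: "tpoch (c / a) q p n = tpoch (c / a) q p (n - j) * tpoch (c / a * q ^ (n - j)) q p j"
    using tpoch_add[of "c/a" q p "n - j" j] j by simp
  have s2: "tpoch (c / (a * q ^ j)) q p n = tpoch (c / (a * q ^ j)) q p j * tpoch (c / a) q p (n - j)"
    using tpoch_add[of "c / (a * q ^ j)" q p j "n - j"] j q by simp
  have r2: "tpoch (c / (a * q ^ j)) q p j = (\<Prod>i<j. - (c / (a * q ^ j) * q ^ i)) * tpoch (a * q / c) q p j"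
    by (rule tpoch_refl[OF q _ _ p]) (use q a c in \<open>auto simp: field_simps\<close>)
  show ?thesis unfolding r1 s1 s2 r2 by (simp add: mult_ac)
qed

lemma X5:
  fixes q a c :: complex
  assumes q: "q \<noteq> 0" and a: "a \<noteq> 0" and c: "c \<noteq> 0"
  shows "q ^ j * ((\<Prod>i<j. - (inverse (q ^ n) * q ^ i)) * (\<Prod>i<j. - (inverse (q ^ j) * q ^ i)))
       = (\<Prod>i<j. - (a * q powi (1 - int n) / c * q ^ i)) * (\<Prod>i<j. - (c / (a * q ^ j) * q ^ i))"
proof -
  define Q where "Q = (\<Prod>i<j. q ^ i)"
  define y1 where "y1 = inverse (q ^ n)"
  define y2 where "y2 = inverse (q ^ j)"
  define y3 where "y3 = a * q powi (1 - int n) / c"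
  define y4 where "y4 = c / (a * q ^ j)"
  have qi: "q powi (1 - int n) = q / q ^ n" using q power_int_diff[of q 1 "int n"] by simp
  have base: "q * ((- y1) * (- y2)) = (- y3) * (- y4)"
    unfolding y1_def y2_def y3_def y4_def qi using q a c by (simp add: field_simps)
  have L: "q ^ j * ((- y1) ^ j * Q * ((- y2) ^ j * Q)) = (q * ((- y1) * (- y2))) ^ j * (Q * Q)"
    by (simp only: power_mult_distrib mult_ac)
  have R: "(- y3) ^ j * Q * ((- y4) ^ j * Q) = ((- y3) * (- y4)) ^ j * (Q * Q)"
    by (simp only: power_mult_distrib mult_ac)
  show ?thesis unfolding prod_neg_pow Q_def[symmetric] y1_def[symmetric] y2_def[symmetric]
      y3_def[symmetric] y4_def[symmetric] L R base ..
qed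


definition Ef :: "complex \<Rightarrow> complex \<Rightarrow> complex \<Rightarrow> nat \<Rightarrow> nat \<Rightarrow> complex \<Rightarrow> complex" where
  "Ef a q p n k w = tpoch (a * w) q p k * tpoch (a / w) q p k
     * (tpoch (a * q ^ (k + 1) * w) q p (n - k) * tpoch (a * q ^ (k + 1) / w) q p (n - k))"

definition alpha :: "complex \<Rightarrow> complex \<Rightarrow> complex \<Rightarrow> complex \<Rightarrow> nat \<Rightarrow> complex" where
  "alpha a q p c n = tpoch (a ^ 2 * q) q p n * tpoch q q p n / (tpoch (a * c) q p n * tpoch (c / a) q p n)"

definition gam :: "complex \<Rightarrow> complex \<Rightarrow> complex \<Rightarrow> complex \<Rightarrow> nat \<Rightarrow> nat \<Rightarrow> complex" where
  "gam a q p c n k = q ^ k * (mtheta (a ^ 2 * q ^ (2 * k)) p / mtheta (a ^ 2) p)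
     * (tpoch (inverse (q ^ n)) q p k * tpoch (a ^ 2) q p k * tpoch (a * q / c) q p k * tpoch (a * c * q ^ n) q p k)
     / (tpoch q q p k * tpoch (a ^ 2 * q ^ (n + 1)) q p k * tpoch (a * c) q p k * tpoch (a * q powi (1 - int n) / c) q p k)
     / (tpoch (c * (a * q ^ k)) q p n * tpoch (c / (a * q ^ k)) q p n)"

lemma key_coef:
  assumes j: "j \<le> n" and q: "q \<noteq> 0" and p: "p \<noteq> 0" "norm p < 1" and a: "a \<noteq> 0" and c: "c \<noteq> 0"
    and nz: "mtheta (a ^ 2) p \<noteq> 0" "tpoch q q p j \<noteq> 0" "tpoch (a ^ 2 * q ^ (n + 1)) q p j \<noteq> 0"
      "tpoch (a * c) q p j \<noteq> 0" "tpoch (a * q powi (1 - int n) / c) q p j \<noteq> 0"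
      "tpoch (c * (a * q ^ j)) q p n \<noteq> 0" "tpoch (c / (a * q ^ j)) q p n \<noteq> 0"
      "tpoch (a * c) q p n \<noteq> 0" "tpoch (c / a) q p n \<noteq> 0"
  shows "alpha a q p c n = gam a q p c n j * Ef a q p n j (a * q ^ j)"
proof -
  have "alpha a q p c n = gam a q p c n j * (tpoch (a * (a * q ^ j)) q p j * tpoch (a / (a * q ^ j)) q p j
     * tpoch (a * q ^ (j + 1) * (a * q ^ j)) q p (n - j) * tpoch (a * q ^ (j + 1) / (a * q ^ j)) q p (n - j))"
    unfolding alpha_def gam_def
    by (rule alg[OF X1[OF j] X2[OF j q p a] X3 X4[OF j q p a c] X5[OF q a c] nz])
  then show ?thesis unfolding Ef_def by (simp only: mult_ac)
qed

lemma Ef_zero: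
  assumes jk: "j \<noteq> k" "j \<le> n" "k \<le> n" and q: "q \<noteq> 0" and a: "a \<noteq> 0" and p: "norm p < 1"
  shows "Ef a q p n k (a * q ^ j) = 0"
proof (cases "j < k")
  case True
  have "mtheta (a / (a * q ^ j) * q ^ j) p = 0" using a q th_one[OF p] by simp
  then have "tpoch (a / (a * q ^ j)) q p k = 0" by (rule tpoch_zero_factor[OF True])
  then show ?thesis by (simp add: Ef_def)
next
  case False
  then have jk2: "j - Suc k < n - k" using jk by auto
  have e: "a * q ^ (k + 1) / (a * q ^ j) * q ^ (j - Suc k) = 1"
  proof -
    have jj: "j = (k + 1) + (j - Suc k)" using False jk by simp
    have "q ^ j = q ^ (k + 1) * q ^ (j - Suc k)" by (subst jj) (rule power_add)
    then show ?thesis using a q by (simp add: field_simps)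
  qed
  have "mtheta (a * q ^ (k + 1) / (a * q ^ j) * q ^ (j - Suc k)) p = 0" unfolding e by (rule th_one[OF p])
  then have "tpoch (a * q ^ (k + 1) / (a * q ^ j)) q p (n - k) = 0" by (rule tpoch_zero_factor[OF jk2])
  then show ?thesis by (simp add: Ef_def)
qed

lemma Vn_Ef:
  assumes p: "p \<noteq> 0" "norm p < 1" and a: "a \<noteq> 0" and q: "q \<noteq> 0" and k: "k \<le> n"
  shows "Vn p n (Ef a q p n k)"
proof -
  have "Vn p (k + (n - k)) (\<lambda>w. (tpoch (a * w) q p k * tpoch (a / w) q p k)
     * (tpoch (a * q ^ (k + 1) * w) q p (n - k) * tpoch (a * q ^ (k + 1) / w) q p (n - k)))"
    by (rule Vn_mult[OF Vn_tpoch[OF p a q] Vn_tpoch[OF p _ q]]) (use a q in simp)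
  then show ?thesis using k unfolding Ef_def[abs_def] by simp
qed

lemma f_F:
  assumes kk: "kk \<le> n" and w: "w \<noteq> 0" and c: "c \<noteq> 0" and q: "q \<noteq> 0"
    and P: "tpoch (c * w) q p n * tpoch (c / w) q p n \<noteq> 0"
  shows "g w / (tpoch (c * w) q p kk * tpoch (c / w) q p kk)
       = g w * (tpoch (c * q ^ kk * w) q p (n - kk) * tpoch (c * q ^ kk / w) q p (n - kk))
         / (tpoch (c * w) q p n * tpoch (c / w) q p n)"
proof -
  have s1: "tpoch (c * w) q p n = tpoch (c * w) q p kk * tpoch (c * q ^ kk * w) q p (n - kk)"
    using tpoch_add[of "c * w" q p kk "n - kk"] kk by (simp add: mult_ac)
  have s2: "tpoch (c / w) q p n = tpoch (c / w) q p kk * tpoch (c * q ^ kk / w) q p (n - kk)"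
    using tpoch_add[of "c / w" q p kk "n - kk"] kk by (simp add: mult_ac)
  show ?thesis using P unfolding s1 s2 by (simp add: field_simps)
qed

lemma term_alg:
  fixes qk t t0 N Az Adz M Aqz Aqdz Fk Pk Bz Bdz :: complex
  assumes "Bz \<noteq> 0" "Bdz \<noteq> 0"
  shows "qk * (t / t0) * (N * Az * Adz) / (M * Aqz * Aqdz) * (Fk / Pk)
       = (qk * (t / t0) * N / M / Pk) * Fk * (Az * Adz * (Bz * Bdz)) / ((Aqz * Bz) * (Aqdz * Bdz))"
  using assms by (simp add: field_simps)


lemma generic_thm:
  fixes q p a c z :: complex and n kk :: nat and g :: "complex \<Rightarrow> complex"
  assumes q: "q \<noteq> 0" and p: "p \<noteq> 0" "norm p < 1"
    and a: "a \<noteq> 0" and c: "c \<noteq> 0" and z: "z \<noteq> 0" and kk: "kk \<le> n"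
    and gh: "g holomorphic_on (- {0})" and gi: "\<forall>w. w \<noteq> 0 \<longrightarrow> g w = g (1 / w)"
    and gp: "\<forall>w. w \<noteq> 0 \<longrightarrow> g (p * w) = inverse (p ^ kk) * inverse (w ^ (2 * kk)) * g w"
    and nz1: "tpoch (a * c) q p n * tpoch (c / a) q p n
              * tpoch (a * q * z) q p n * tpoch (a * q / z) q p n \<noteq> 0"
    and nz2: "mtheta (a ^ 2) p \<noteq> 0"
    and nz3: "\<And>k. k \<le> n \<Longrightarrow>
              tpoch q q p k * tpoch (a ^ 2 * q ^ (n + 1)) q p k * tpoch (a * c) q p k
              * tpoch (a * q powi (1 - int n) / c) q p k
              * tpoch (a * q * z) q p k * tpoch (a * q / z) q p k \<noteq> 0"
    and nz4: "tpoch (c * z) q p n * tpoch (c / z) q p n \<noteq> 0"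
    and nz5: "\<And>k. k \<le> n \<Longrightarrow>
              tpoch (c * (a * q ^ k)) q p n * tpoch (c / (a * q ^ k)) q p n \<noteq> 0"
    and gen: "\<And>s. s \<le> 2 * n \<Longrightarrow> mtheta (a ^ 2 * q ^ s) p \<noteq> 0"
    and f: "f = (\<lambda>z. g z / (tpoch (c * z) q p kk * tpoch (c / z) q p kk))"
  shows "tpoch (a ^ 2 * q) q p n * tpoch q q p n * tpoch (c * z) q p n * tpoch (c / z) q p n
         / (tpoch (a * c) q p n * tpoch (c / a) q p n
            * tpoch (a * q * z) q p n * tpoch (a * q / z) q p n) * f z
       = (\<Sum>k\<le>n. q ^ k * (mtheta (a ^ 2 * q ^ (2 * k)) p / mtheta (a ^ 2) p)
           * (tpoch (inverse (q ^ n)) q p k * tpoch (a ^ 2) q p k * tpoch (a * q / c) q p k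
              * tpoch (a * c * q ^ n) q p k * tpoch (a * z) q p k * tpoch (a / z) q p k)
           / (tpoch q q p k * tpoch (a ^ 2 * q ^ (n + 1)) q p k * tpoch (a * c) q p k
              * tpoch (a * q powi (1 - int n) / c) q p k
              * tpoch (a * q * z) q p k * tpoch (a * q / z) q p k)
           * f (a * q ^ k))"
proof -
  define F where "F = (\<lambda>w. g w * (tpoch (c * q ^ kk * w) q p (n - kk) * tpoch (c * q ^ kk / w) q p (n - kk)))"
  define P where "P = (\<lambda>w. tpoch (c * w) q p n * tpoch (c / w) q p n)"
  have fF: "f w = F w / P w" if "w \<noteq> 0" "P w \<noteq> 0" for w
    unfolding f F_def P_def by (rule f_F[OF kk that(1) c q that(2)[unfolded P_def]])
  have VF: "Vn p n F"
  proof -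
    have gi': "\<forall>w. w \<noteq> 0 \<longrightarrow> g (1 / w) = g w"
    proof (intro allI impI)
      fix w :: complex assume "w \<noteq> 0"
      from gi[rule_format, OF this] show "g (1 / w) = g w" by (rule sym)
    qed
    have Vg: "Vn p kk g" unfolding Vn_def using gh gi' gp by blast
    have "Vn p (kk + (n - kk)) F"
      unfolding F_def by (rule Vn_mult[OF Vg Vn_tpoch[OF p _ q]]) (use c q in simp)
    then show ?thesis using kk by simp
  qed
  define Gf where "Gf = (\<lambda>w. alpha a q p c n * F w - (\<Sum>k\<le>n. gam a q p c n k * F (a * q ^ k) * Ef a q p n k w))"
  have VG: "Vn p n Gf"
  proof -
    have V1: "Vn p n (\<lambda>w. alpha a q p c n * F w)" by (rule Vn_scale[OF VF])
    have V2: "Vn p n (\<lambda>w. \<Sum>k\<le>n. gam a q p c n k * F (a * q ^ k) * Ef a q p n k w)"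
    proof (rule Vn_sum)
      fix k assume "k \<in> {..n}"
      then have "Vn p n (Ef a q p n k)" by (intro Vn_Ef p a q) auto
      from Vn_scale[OF this, of "gam a q p c n k * F (a * q ^ k)"]
      show "Vn p n (\<lambda>w. gam a q p c n k * F (a * q ^ k) * Ef a q p n k w)" by simp
    qed simp
    show ?thesis unfolding Gf_def by (rule Vn_diff[OF V1 V2])
  qed
  have Qn: "tpoch q q p n \<noteq> 0" using nz3[of n] by auto
  have Gz: "Gf (a * q ^ j) = 0" if j: "j \<le> n" for j
  proof -
    define Hs where "Hs = (\<lambda>k. gam a q p c n k * F (a * q ^ k) * Ef a q p n k (a * q ^ j))"
    have "(\<Sum>k\<le>n. Hs k) = Hs j + (\<Sum>k\<in>{..n}-{j}. Hs k)"
      by (rule sum.remove) (use j in auto)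
    also have "(\<Sum>k\<in>{..n}-{j}. Hs k) = 0"
      by (rule sum.neutral) (use Ef_zero[OF _ j _ q a p(2)] in \<open>auto simp: Hs_def\<close>)
    finally have S: "(\<Sum>k\<le>n. Hs k) = Hs j" by simp
    have n3: "tpoch q q p j \<noteq> 0" "tpoch (a ^ 2 * q ^ (n + 1)) q p j \<noteq> 0"
      "tpoch (a * c) q p j \<noteq> 0" "tpoch (a * q powi (1 - int n) / c) q p j \<noteq> 0"
      using nz3[OF j] by auto
    have n5: "tpoch (c * (a * q ^ j)) q p n \<noteq> 0" "tpoch (c / (a * q ^ j)) q p n \<noteq> 0"
      using nz5[OF j] by auto
    have n1: "tpoch (a * c) q p n \<noteq> 0" "tpoch (c / a) q p n \<noteq> 0" using nz1 by auto
    have K: "alpha a q p c n = gam a q p c n j * Ef a q p n j (a * q ^ j)"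
      by (rule key_coef[OF j q p a c nz2 n3 n5 n1])
    show ?thesis unfolding Gf_def using S unfolding Hs_def K by (simp add: algebra_simps)
  qed
  have Gz0: "Gf z = 0"
  proof (rule vanish[OF p VG _ _ z, where ys="\<lambda>j. a * q ^ j"])
    show "\<forall>j\<le>n. a * q ^ j \<noteq> 0 \<and> mtheta ((a * q ^ j)\<^sup>2) p \<noteq> 0 \<and> Gf (a * q ^ j) = 0"
    proof (intro allI impI conjI)
      fix j assume j: "j \<le> n"
      show "a * q ^ j \<noteq> 0" using a q by simp
      have "(a * q ^ j)\<^sup>2 = a ^ 2 * q ^ (2 * j)" by (simp add: power_mult_distrib power_mult[symmetric] mult.commute)
      then show "mtheta ((a * q ^ j)\<^sup>2) p \<noteq> 0" using gen[of "2 * j"] j by simp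
      show "Gf (a * q ^ j) = 0" by (rule Gz[OF j])
    qed
    show "\<forall>i\<le>n. \<forall>j\<le>n. i \<noteq> j \<longrightarrow> mtheta (a * q ^ i * (a * q ^ j)) p \<noteq> 0 \<and> mtheta (a * q ^ i / (a * q ^ j)) p \<noteq> 0"
    proof (intro allI impI conjI)
      fix i j assume ij: "i \<le> n" "j \<le> n" "i \<noteq> j"
      have "a * q ^ i * (a * q ^ j) = a ^ 2 * q ^ (i + j)" by (simp add: power2_eq_square power_add mult_ac)
      then show "mtheta (a * q ^ i * (a * q ^ j)) p \<noteq> 0" using gen[of "i + j"] ij by simp
      show "mtheta (a * q ^ i / (a * q ^ j)) p \<noteq> 0"
      proof (cases "i > j")
        case True
        have e: "a * q ^ i / (a * q ^ j) = q * q ^ (i - j - 1)"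
        proof -
          have ii: "i = j + (1 + (i - j - 1))" using True by simp
          have "q ^ i = q ^ j * (q * q ^ (i - j - 1))" by (subst ii) (simp add: power_add)
          then show ?thesis using a q by (simp add: field_simps)
        qed
        show ?thesis unfolding e by (rule tpoch_nz_factor[OF Qn]) (use True ij in auto)
      next
        case False
        then have lt: "i < j" using ij by simp
        have e: "a * q ^ i / (a * q ^ j) = 1 / (q * q ^ (j - i - 1))"
        proof -
          have jj: "j = i + (1 + (j - i - 1))" using lt by simp
          have "q ^ j = q ^ i * (q * q ^ (j - i - 1))" by (subst jj) (simp add: power_add)
          then show ?thesis using a q by (simp add: field_simps)
        qed
        have nzt: "mtheta (q * q ^ (j - i - 1)) p \<noteq> 0"
          by (rule tpoch_nz_factor[OF Qn]) (use lt ij in auto)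
        have "mtheta (1 / (q * q ^ (j - i - 1))) p = - mtheta (q * q ^ (j - i - 1)) p / (q * q ^ (j - i - 1))"
          by (rule th_inv) (use q p in auto)
        then show ?thesis unfolding e using nzt q by simp
      qed
    qed
  qed
  define D where "D = tpoch (a * q * z) q p n * tpoch (a * q / z) q p n"
  have D0: "D \<noteq> 0" using nz1 by (simp add: D_def)
  have Pz: "P z \<noteq> 0" using nz4 by (simp add: P_def)
  have LHS: "tpoch (a ^ 2 * q) q p n * tpoch q q p n * tpoch (c * z) q p n * tpoch (c / z) q p n
         / (tpoch (a * c) q p n * tpoch (c / a) q p n
            * tpoch (a * q * z) q p n * tpoch (a * q / z) q p n) * f z = alpha a q p c n * F z / D"
    unfolding fF[OF z Pz] using Pz D0 unfolding alpha_def D_def P_def by (simp add: field_simps)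
  have RHSk: "q ^ k * (mtheta (a ^ 2 * q ^ (2 * k)) p / mtheta (a ^ 2) p)
           * (tpoch (inverse (q ^ n)) q p k * tpoch (a ^ 2) q p k * tpoch (a * q / c) q p k
              * tpoch (a * c * q ^ n) q p k * tpoch (a * z) q p k * tpoch (a / z) q p k)
           / (tpoch q q p k * tpoch (a ^ 2 * q ^ (n + 1)) q p k * tpoch (a * c) q p k
              * tpoch (a * q powi (1 - int n) / c) q p k
              * tpoch (a * q * z) q p k * tpoch (a * q / z) q p k)
           * f (a * q ^ k) = gam a q p c n k * F (a * q ^ k) * Ef a q p n k z / D" if k: "k \<le> n" for k
  proof -
    have Pk: "P (a * q ^ k) \<noteq> 0" using nz5[OF k] by (simp add: P_def)
    have s1: "tpoch (a * q * z) q p n = tpoch (a * q * z) q p k * tpoch (a * q ^ (k + 1) * z) q p (n - k)"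
      using tpoch_add[of "a * q * z" q p k "n - k"] k by (simp add: mult_ac)
    have s2: "tpoch (a * q / z) q p n = tpoch (a * q / z) q p k * tpoch (a * q ^ (k + 1) / z) q p (n - k)"
      using tpoch_add[of "a * q / z" q p k "n - k"] k by (simp add: mult_ac)
    have B: "tpoch (a * q ^ (k + 1) * z) q p (n - k) \<noteq> 0" "tpoch (a * q ^ (k + 1) / z) q p (n - k) \<noteq> 0"
      using nz1 unfolding s1 s2 by auto
    have ak: "a * q ^ k \<noteq> 0" using a q by simp
    show ?thesis
      unfolding fF[OF ak Pk] D_def s1 s2 Ef_def gam_def P_def
      by (rule term_alg[OF B])
  qed
  have "(\<Sum>k\<le>n. gam a q p c n k * F (a * q ^ k) * Ef a q p n k z / D)
      = (\<Sum>k\<le>n. gam a q p c n k * F (a * q ^ k) * Ef a q p n k z) / D"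
    by (simp add: sum_divide_distrib)
  also have "\<dots> = alpha a q p c n * F z / D" using Gz0 unfolding Gf_def by simp
  finally show ?thesis unfolding LHS using RHSk by simp
qed

lemma isCont_th [continuous_intros]:
  assumes p: "norm p < 1" and u: "isCont u a0" and u0: "u a0 \<noteq> 0"
  shows "isCont (\<lambda>a. mtheta (u a) p) a0"
  using continuous_at_compose[OF u holo_isCont[OF th_holo[OF p] u0]] by (simp add: o_def)

lemma isCont_tpoch [continuous_intros]:
  assumes p: "norm p < 1" and q: "q \<noteq> 0" and u: "isCont u a0" and u0: "u a0 \<noteq> 0"
  shows "isCont (\<lambda>a. tpoch (u a) q p m) a0"
  unfolding tpoch_def
  by (intro continuous_prod isCont_th p continuous_intros u) (use q u0 in auto)

lemma isCont_holo_comp: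
  assumes g: "g holomorphic_on (- {0})" and u: "isCont u a0" and u0: "u a0 \<noteq> 0"
  shows "isCont (\<lambda>a. g (u a)) a0"
  using continuous_at_compose[OF u holo_isCont[OF g u0]] by (simp add: o_def)

lemma sq_roots_finite: "finite {a :: complex. a ^ 2 = w}"
proof (cases "{a :: complex. a ^ 2 = w} = {}")
  case True then show ?thesis by simp
next
  case False
  then obtain x where x: "x ^ 2 = w" by auto
  have "{a :: complex. a ^ 2 = w} \<subseteq> {x, - x}"
  proof
    fix a assume "a \<in> {a :: complex. a ^ 2 = w}"
    then have "a ^ 2 = x ^ 2" using x by simp
    then have "(a - x) * (a + x) = 0" by (simp add: algebra_simps power2_eq_square)
    then show "a \<in> {x, - x}" by (auto simp: add_eq_0_iff)
  qed
  then show ?thesis by (rule finite_subset) simp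
qed

lemma bad_countable:
  assumes p: "p \<noteq> 0" "norm p < 1" and q: "q \<noteq> 0"
  shows "countable {a. \<exists>s\<le>N. mtheta (a ^ 2 * q ^ s) p = 0}"
proof -
  have "{a. \<exists>s\<le>N. mtheta (a ^ 2 * q ^ s) p = 0} \<subseteq> {0} \<union> (\<Union>s\<in>{..N}. \<Union>m\<in>(UNIV :: int set). {a. a ^ 2 = p powi m / q ^ s})"
  proof
    fix a assume "a \<in> {a. \<exists>s\<le>N. mtheta (a ^ 2 * q ^ s) p = 0}"
    then obtain s where s: "s \<le> N" "mtheta (a ^ 2 * q ^ s) p = 0" by auto
    show "a \<in> {0} \<union> (\<Union>s\<in>{..N}. \<Union>m\<in>(UNIV :: int set). {a. a ^ 2 = p powi m / q ^ s})"
    proof (cases "a = 0")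
      case False
      then have "a ^ 2 * q ^ s \<noteq> 0" using q by simp
      then obtain m :: int where "a ^ 2 * q ^ s = p powi m" using th_zero_iff[OF _ p] s by blast
      then have "a ^ 2 = p powi m / q ^ s" using q by (simp add: field_simps)
      then show ?thesis using s by blast
    qed blast
  qed
  moreover have "countable ({0} \<union> (\<Union>s\<in>{..N}. \<Union>m\<in>(UNIV :: int set). {a. a ^ 2 = p powi m / q ^ s}))"
  proof -
    have c1: "countable (\<Union>m\<in>(UNIV :: int set). {a. a ^ 2 = p powi m / q ^ s})" for s
    proof (rule countable_UN)
      show "countable (UNIV :: int set)" by simp
    qed (rule countable_finite[OF sq_roots_finite])
    have "countable (\<Union>s\<in>{..N}. \<Union>m\<in>(UNIV :: int set). {a. a ^ 2 = p powi m / q ^ s})"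
      by (rule countable_UN[OF countable_finite[OF finite_atMost] c1])
    then show ?thesis by simp
  qed
  ultimately show ?thesis by (rule countable_subset)
qed


lemma gen_all:
  fixes q p a c z :: complex and n kk :: nat and g f :: "complex \<Rightarrow> complex"
  assumes q: "q \<noteq> 0" and p: "p \<noteq> 0" "norm p < 1"
    and a: "a \<noteq> 0" and c: "c \<noteq> 0" and z: "z \<noteq> 0" and kk: "kk \<le> n"
    and gh: "g holomorphic_on (- {0})" and gi: "\<forall>w. w \<noteq> 0 \<longrightarrow> g w = g (1 / w)"
    and gp: "\<forall>w. w \<noteq> 0 \<longrightarrow> g (p * w) = inverse (p ^ kk) * inverse (w ^ (2 * kk)) * g w"
    and nz1: "tpoch (a * c) q p n * tpoch (c / a) q p n
              * tpoch (a * q * z) q p n * tpoch (a * q / z) q p n \<noteq> 0"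
    and nz2: "mtheta (a ^ 2) p \<noteq> 0"
    and nz3: "\<And>k. k \<le> n \<Longrightarrow>
              tpoch q q p k * tpoch (a ^ 2 * q ^ (n + 1)) q p k * tpoch (a * c) q p k
              * tpoch (a * q powi (1 - int n) / c) q p k
              * tpoch (a * q * z) q p k * tpoch (a * q / z) q p k \<noteq> 0"
    and nz4: "tpoch (c * z) q p n * tpoch (c / z) q p n \<noteq> 0"
    and nz5: "\<And>k. k \<le> n \<Longrightarrow>
              tpoch (c * (a * q ^ k)) q p n * tpoch (c / (a * q ^ k)) q p n \<noteq> 0"
    and f: "f = (\<lambda>z. g z / (tpoch (c * z) q p kk * tpoch (c / z) q p kk))"
  shows "tpoch (a ^ 2 * q) q p n * tpoch q q p n * tpoch (c * z) q p n * tpoch (c / z) q p n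
         / (tpoch (a * c) q p n * tpoch (c / a) q p n
            * tpoch (a * q * z) q p n * tpoch (a * q / z) q p n) * f z
       = (\<Sum>k\<le>n. q ^ k * (mtheta (a ^ 2 * q ^ (2 * k)) p / mtheta (a ^ 2) p)
           * (tpoch (inverse (q ^ n)) q p k * tpoch (a ^ 2) q p k * tpoch (a * q / c) q p k
              * tpoch (a * c * q ^ n) q p k * tpoch (a * z) q p k * tpoch (a / z) q p k)
           / (tpoch q q p k * tpoch (a ^ 2 * q ^ (n + 1)) q p k * tpoch (a * c) q p k
              * tpoch (a * q powi (1 - int n) / c) q p k
              * tpoch (a * q * z) q p k * tpoch (a * q / z) q p k)
           * f (a * q ^ k))"
proof -
  define L where "L = (\<lambda>a. tpoch (a ^ 2 * q) q p n * tpoch q q p n * tpoch (c * z) q p n * tpoch (c / z) q p n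
         / (tpoch (a * c) q p n * tpoch (c / a) q p n
            * tpoch (a * q * z) q p n * tpoch (a * q / z) q p n) * f z)"
  define R where "R = (\<lambda>a. \<Sum>k\<le>n. q ^ k * (mtheta (a ^ 2 * q ^ (2 * k)) p / mtheta (a ^ 2) p)
           * (tpoch (inverse (q ^ n)) q p k * tpoch (a ^ 2) q p k * tpoch (a * q / c) q p k
              * tpoch (a * c * q ^ n) q p k * tpoch (a * z) q p k * tpoch (a / z) q p k)
           / (tpoch q q p k * tpoch (a ^ 2 * q ^ (n + 1)) q p k * tpoch (a * c) q p k
              * tpoch (a * q powi (1 - int n) / c) q p k
              * tpoch (a * q * z) q p k * tpoch (a * q / z) q p k)
           * f (a * q ^ k))"
  define Phi where "Phi = (\<lambda>a. a * (tpoch (a * c) q p n * tpoch (c / a) q p n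
              * tpoch (a * q * z) q p n * tpoch (a * q / z) q p n) * mtheta (a ^ 2) p
       * (\<Prod>k\<le>n. tpoch q q p k * tpoch (a ^ 2 * q ^ (n + 1)) q p k * tpoch (a * c) q p k
              * tpoch (a * q powi (1 - int n) / c) q p k
              * tpoch (a * q * z) q p k * tpoch (a * q / z) q p k)
       * (\<Prod>k\<le>n. tpoch (c * (a * q ^ k)) q p n * tpoch (c / (a * q ^ k)) q p n))"
  define S where "S = {b. Phi b \<noteq> 0 \<and> (\<forall>s\<le>2 * n. mtheta (b ^ 2 * q ^ s) p \<noteq> 0)}"
  have LR: "L b = R b" if b: "b \<in> S" for b
  proof -
    have P: "Phi b \<noteq> 0" and gen: "\<And>s. s \<le> 2 * n \<Longrightarrow> mtheta (b ^ 2 * q ^ s) p \<noteq> 0"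
      using b by (auto simp: S_def)
    have hb: "b \<noteq> 0" "tpoch (b * c) q p n * tpoch (c / b) q p n
              * tpoch (b * q * z) q p n * tpoch (b * q / z) q p n \<noteq> 0" "mtheta (b ^ 2) p \<noteq> 0"
      "\<forall>k\<in>{..n}. tpoch q q p k * tpoch (b ^ 2 * q ^ (n + 1)) q p k * tpoch (b * c) q p k
              * tpoch (b * q powi (1 - int n) / c) q p k
              * tpoch (b * q * z) q p k * tpoch (b * q / z) q p k \<noteq> 0"
      "\<forall>k\<in>{..n}. tpoch (c * (b * q ^ k)) q p n * tpoch (c / (b * q ^ k)) q p n \<noteq> 0"
      using P unfolding Phi_def by (auto simp: prod_zero_iff simp del: mult_eq_0_iff)
    show ?thesis unfolding L_def R_def
      by (rule generic_thm[OF q p hb(1) c z kk gh gi gp hb(2) hb(3) _ nz4 _ gen f]) (use hb(4,5) in auto)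
  qed
  have Phi0: "Phi a \<noteq> 0"
    unfolding Phi_def using a nz1 nz2 nz3 nz5 by (auto simp: prod_zero_iff simp del: mult_eq_0_iff)
  have cPhi: "isCont Phi a"
    unfolding Phi_def by (intro continuous_intros p q) (use a c z q in auto)
  obtain e where e: "e > 0" "\<And>y. dist a y < e \<Longrightarrow> Phi y \<noteq> 0"
    using continuous_at_avoid[OF cPhi Phi0] by blast
  have lim: "a islimpt S"
    unfolding islimpt_def
  proof (intro allI impI)
    fix T :: "complex set" assume T: "a \<in> T" "open T"
    obtain e' where e': "e' > 0" "ball a e' \<subseteq> T" using T open_contains_ball by blast
    define B where "B = ball a (min e e')"
    have uB: "uncountable B" unfolding B_def by (rule uncountable_ball) (use e e' in auto)
    have cnt: "countable ({b. \<exists>s\<le>2 * n. mtheta (b ^ 2 * q ^ s) p = 0} \<union> {a})"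
      using bad_countable[OF p q] by simp
    have U: "uncountable (B - ({b. \<exists>s\<le>2 * n. mtheta (b ^ 2 * q ^ s) p = 0} \<union> {a}))"
      by (rule uncountable_minus_countable[OF uB cnt])
    obtain y where y: "y \<in> B" "y \<noteq> a" "\<forall>s\<le>2 * n. mtheta (y ^ 2 * q ^ s) p \<noteq> 0"
    proof -
      have "B - ({b. \<exists>s\<le>2 * n. mtheta (b ^ 2 * q ^ s) p = 0} \<union> {a}) \<noteq> {}"
        using uncountable_infinite[OF U] finite.emptyI by metis
      then obtain y where
        "y \<in> B - ({b. \<exists>s\<le>2 * n. mtheta (b ^ 2 * q ^ s) p = 0} \<union> {a})"
        by blast
      then show ?thesis using that by blast
    qed
    have "Phi y \<noteq> 0" using e(2)[of y] y(1) by (auto simp: B_def)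
    then have "y \<in> S" using y(3) by (simp add: S_def)
    moreover have "y \<in> T" using y(1) e'(2) by (auto simp: B_def)
    ultimately show "\<exists>y\<in>S. y \<in> T \<and> y \<noteq> a" using y(2) by blast
  qed
  have k5: "tpoch (c * (a * q ^ k)) q p kk * tpoch (c / (a * q ^ k)) q p kk \<noteq> 0" if "k \<le> n" for k
    using nz5[OF that] tpoch_nz_le[OF _ kk] by auto
  have cL: "isCont L a"
    unfolding L_def by (intro continuous_intros p q) (use a c z q nz1 in auto)
  have cR: "isCont R a"
    unfolding R_def f
    by (intro continuous_intros isCont_holo_comp[OF gh] p q) (use a c z q nz2 nz3 k5 in auto)
  have tL: "(L \<longlongrightarrow> L a) (at a within S)"
    using cL unfolding isCont_def by (rule tendsto_within_subset[OF _ subset_UNIV])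
  have tR: "(R \<longlongrightarrow> R a) (at a within S)"
    using cR unfolding isCont_def by (rule tendsto_within_subset[OF _ subset_UNIV])
  have ev: "eventually (\<lambda>b. R b = L b) (at a within S)"
    using LR by (auto simp: eventually_at_filter)
  have tL': "(L \<longlongrightarrow> R a) (at a within S)"
    using Lim_transform_eventually[OF tR ev] .
  have ntriv: "at a within S \<noteq> bot" using lim trivial_limit_within by blast
  have "L a = R a" using tendsto_unique[OF ntriv tL tL'] .
  then show ?thesis unfolding L_def R_def .
qed

lemma module_fscale: "module fscale"
  by unfold_locales (auto simp: fscale_def fun_eq_iff algebra_simps)

lemma sum_fun_apply': "(\<Sum>h\<in>t. fscale (r h) h) x = (\<Sum>h\<in>t. r h * h x)"
  by (induction t rule: infinite_finite_induct) (auto simp: fscale_def)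

lemma lin_comb:
  fixes A :: complex and C :: "nat \<Rightarrow> complex"
  assumes "\<And>h. h \<in> t \<Longrightarrow> A * h z = (\<Sum>k\<le>n. C k * h (w k))"
  shows "A * (\<Sum>h\<in>t. r h * h z) = (\<Sum>k\<le>n. C k * (\<Sum>h\<in>t. r h * h (w k)))"
proof -
  have "A * (\<Sum>h\<in>t. r h * h z) = (\<Sum>h\<in>t. r h * (A * h z))"
    by (simp add: sum_distrib_left mult_ac)
  also have "\<dots> = (\<Sum>h\<in>t. r h * (\<Sum>k\<le>n. C k * h (w k)))"
    using assms by simp
  also have "\<dots> = (\<Sum>k\<le>n. C k * (\<Sum>h\<in>t. r h * h (w k)))"
    by (simp add: sum_distrib_left sum.swap[of _ t] mult_ac)
  finally show ?thesis .
qed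

theorem theorem2p6:
  fixes q p a c z :: complex and n :: nat and f :: "complex \<Rightarrow> complex"
  assumes q: "0 < norm q" "norm q < 1"
    and p: "0 < norm p" "norm p < 1"
    and a: "a \<noteq> 0" and c: "c \<noteq> 0" and z: "z \<noteq> 0"
    and fW: "f \<in> W q p c n"
    and nz1: "tpoch (a * c) q p n * tpoch (c / a) q p n
              * tpoch (a * q * z) q p n * tpoch (a * q / z) q p n \<noteq> 0"
    and nz2: "mtheta (a ^ 2) p \<noteq> 0"
    and nz3: "\<And>k. k \<le> n \<Longrightarrow>
              tpoch q q p k * tpoch (a ^ 2 * q ^ (n + 1)) q p k * tpoch (a * c) q p k
              * tpoch (a * q powi (1 - int n) / c) q p k
              * tpoch (a * q * z) q p k * tpoch (a * q / z) q p k \<noteq> 0"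
    and nz4: "tpoch (c * z) q p n * tpoch (c / z) q p n \<noteq> 0"
    and nz5: "\<And>k. k \<le> n \<Longrightarrow>
              tpoch (c * (a * q ^ k)) q p n * tpoch (c / (a * q ^ k)) q p n \<noteq> 0"
  shows "tpoch (a ^ 2 * q) q p n * tpoch q q p n * tpoch (c * z) q p n * tpoch (c / z) q p n
         / (tpoch (a * c) q p n * tpoch (c / a) q p n
            * tpoch (a * q * z) q p n * tpoch (a * q / z) q p n) * f z
       = (\<Sum>k\<le>n. q ^ k * (mtheta (a ^ 2 * q ^ (2 * k)) p / mtheta (a ^ 2) p)
           * (tpoch (inverse (q ^ n)) q p k * tpoch (a ^ 2) q p k * tpoch (a * q / c) q p k
              * tpoch (a * c * q ^ n) q p k * tpoch (a * z) q p k * tpoch (a / z) q p k)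
           / (tpoch q q p k * tpoch (a ^ 2 * q ^ (n + 1)) q p k * tpoch (a * c) q p k
              * tpoch (a * q powi (1 - int n) / c) q p k
              * tpoch (a * q * z) q p k * tpoch (a * q / z) q p k)
           * f (a * q ^ k))"
proof -
  have q0: "q \<noteq> 0" using q by auto
  have p0: "p \<noteq> 0" using p by auto
  obtain t r where t: "finite t" "t \<subseteq> Wgen q p c n" and fe: "f = (\<Sum>h\<in>t. fscale (r h) h)"
    using fW unfolding W_def module.span_explicit[OF module_fscale] by blast
  have fx: "f x = (\<Sum>h\<in>t. r h * h x)" for x
    unfolding fe by (rule sum_fun_apply')
  define A where "A = tpoch (a ^ 2 * q) q p n * tpoch q q p n * tpoch (c * z) q p n * tpoch (c / z) q p n
         / (tpoch (a * c) q p n * tpoch (c / a) q p n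
            * tpoch (a * q * z) q p n * tpoch (a * q / z) q p n)"
  define C where "C = (\<lambda>k. q ^ k * (mtheta (a ^ 2 * q ^ (2 * k)) p / mtheta (a ^ 2) p)
           * (tpoch (inverse (q ^ n)) q p k * tpoch (a ^ 2) q p k * tpoch (a * q / c) q p k
              * tpoch (a * c * q ^ n) q p k * tpoch (a * z) q p k * tpoch (a / z) q p k)
           / (tpoch q q p k * tpoch (a ^ 2 * q ^ (n + 1)) q p k * tpoch (a * c) q p k
              * tpoch (a * q powi (1 - int n) / c) q p k
              * tpoch (a * q * z) q p k * tpoch (a * q / z) q p k))"
  have each: "A * h z = (\<Sum>k\<le>n. C k * h (a * q ^ k))" if h: "h \<in> t" for h
  proof -
    have "h \<in> Wgen q p c n" using h t by auto
    then obtain g kk where hg: "h = (\<lambda>z. g z / (tpoch (c * z) q p kk * tpoch (c / z) q p kk))"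
      and kk: "kk \<le> n" and gh: "g holomorphic_on (- {0})"
      and gi: "\<forall>z. z \<noteq> 0 \<longrightarrow> g z = g (1 / z)"
      and gp: "\<forall>z. z \<noteq> 0 \<longrightarrow> g (p * z) = inverse (p ^ kk) * inverse (z ^ (2 * kk)) * g z"
      unfolding Wgen_def by blast
    show ?thesis unfolding A_def C_def
      by (rule gen_all[OF q0 p0 p(2) a c z kk gh gi gp nz1 nz2 nz3 nz4 nz5 hg])
  qed
  have "A * f z = (\<Sum>k\<le>n. C k * f (a * q ^ k))"
    unfolding fx by (rule lin_comb[OF each])
  then show ?thesis unfolding A_def C_def .
qed

end
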